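(* Assume the standing setting described in the context, and suppose that $\{i\in I:C(A_i)=\infty\}=\{\ell\}$ with $\ell\in I^-$ and $A_i\cap A_\ell=\varnothing$ for all $i\ne\ell$. For each compact $K_\ell\subset A_\ell$ let $\boldsymbol A_{K_\ell}=(A^{K_\ell}_i)_{i\in I}$ be the condenser with $A^{K_\ell}_i=A_i$ for $i\ne\ell$ and $A^{K_\ell}_\ell=K_\ell$ (same signs), and let $G_\chi(\boldsymbol A_{K_\ell},\boldsymbol a,g)$ be the infimum of $G_\chi$ over vector measures of finite energy on $\boldsymbol A_{K_\ell}$ with $\int g\,d\mu^i=a_i$ for all $i\in I$ (with $\inf\varnothing=+\infty$). Then $$G_\chi(\boldsymbol A,\boldsymbol a,g)=\lim_{K_\ell\uparrow A_\ell}G_\chi(\boldsymbol A_{K_\ell},\boldsymbol a,g),$$ the limit being taken along the increasing filtering family of all compact subsets of $A_\ell$ ordered by inclusion.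
   Context: Standing setting. $\mathrm X$ noncompact locally compact Hausdorff; $\mathfrak M$ real Radon measures, vague topology; $S(\nu)$ support. Kernel $\kappa:\mathrm X\times\mathrm X\to[0,\infty]$ lower semicontinuous, symmetric; $\kappa(\nu,\nu_1)=\int\kappa\,d(\nu\otimes\nu_1)$, $\kappa(x,\nu)=\int\kappa(x,y)d\nu(y)$; $\mathcal E$ = measures with $\kappa(\nu,\nu)$ well defined and finite. Assumed: (a) strictly positive definite ($\|\nu\|=\kappa(\nu,\nu)^{1/2}$ a norm on the pre-Hilbert space $\mathcal E$); (b) consistent: every strong Cauchy net in $\mathcal E^+=\{\nu\in\mathcal E:\nu\ge0\}$ converges strongly to each of its vague cluster points; (c) $\kappa(x,y)$ finite, continuous for $x\ne y$; (d) for each $\varepsilon>0$, compact $K$ there is compact $K'$ with $\kappa(x,y)<\varepsilon$ for $x\in K,y\notin K'$; (e) generalized maximum principle with constant $h\ge1$. $\mathcal E^+_E$: elements of $\mathcal E^+$ concentrated on $E$; interior capacity $C(E)=1/\inf\{\kappa(\nu,\nu):\nu\in\mathcal E^+_E,\nu(E)=1\}$; "n.e." = outside a set of interior capacity zero. Condenser: disjoint countable $I^+,I^-$, $I=I^+\cup I^-$; nonempty closed $A_i$, locally finite, $A_i\cap A_j=\varnothing$ for $i\in I^+,j\in I^-$; $\alpha_i=\pm1$ on $I^\pm$; $A^\pm=\bigcup_{I^\pm}A_i$, $A=\bigcup A_i$; $\sup_{A^+\times A^-}\kappa<\infty$. Vector measures $\boldsymbol\mu=(\mu^i)$, $\mu^i\ge0$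 concentrated on $A_i$; $R\boldsymbol\mu=\sum\alpha_i\mu^i$; $\mathcal E^+(\boldsymbol A)$ those of finite energy $\sum_{i,j}\alpha_i\alpha_j\kappa(\mu^i,\mu^j)$. External field: bounded signed $\chi\in\mathcal E$, $S(\chi^+)\cap A^-=\varnothing$, $S(\chi^-)\cap A^+=\varnothing$; $G_\chi(\boldsymbol\mu)=\|R\boldsymbol\mu\|^2+2\kappa(\chi,R\boldsymbol\mu)$. $g$ continuous on $A$, $\inf_Ag>0$, and for each $i$ either $g|_{A_i}$ bounded or $g^{r_i}\le\kappa(\cdot,\nu_i)$ n.e. on $A_i$ for some $r_i>1,\nu_i\in\mathcal E$. $\boldsymbol a=(a_i)$, $a_i>0$, $\sum a_i<\infty$. $G_\chi(\boldsymbol A,\boldsymbol a,g)$ = infimum of $G_\chi$ over $\{\boldsymbol\mu\in\mathcal E^+(\boldsymbol A):\int g\,d\mu^i=a_i\ \forall i\in I\}$, assumed $<\infty$. *)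

theory Defs
  imports "HOL-Analysis.Analysis"
begin

definition radon :: "'a::t2_space measure \<Rightarrow> bool" where
  "radon M \<longleftrightarrow> sets M = sets borel \<and>
     (\<forall>K. compact K \<longrightarrow> emeasure M K < \<infinity>) \<and>
     (\<forall>U. open U \<longrightarrow> emeasure M U = (SUP K\<in>{K. compact K \<and> K \<subseteq> U}. emeasure M K)) \<and>
     (\<forall>B\<in>sets borel. emeasure M B = (INF U\<in>{U. open U \<and> B \<subseteq> U}. emeasure M U))"

text \<open>A real (signed) Radon measure is represented by its Jordan decomposition
(positive part, negative part): two positive Radon measures that are disjoint in the
lattice sense (their infimum vanishes on every compact set).\<close>
type_synonym 'a smeasure = "'a measure \<times> 'a measure"

definition signed_radon :: "'a::t2_space smeasure \<Rightarrow> bool" where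
  "signed_radon \<nu> \<longleftrightarrow> radon (fst \<nu>) \<and> radon (snd \<nu>) \<and>
     (\<forall>K. compact K \<longrightarrow>
        (INF C\<in>{C\<in>sets borel. C \<subseteq> K}. emeasure (fst \<nu>) C + emeasure (snd \<nu>) (K - C)) = 0)"

definition support :: "'a::topological_space measure \<Rightarrow> 'a set" where
  "support M = {x. \<forall>U. open U \<longrightarrow> x \<in> U \<longrightarrow> emeasure M U \<noteq> 0}"

definition concentrated :: "'a::topological_space measure \<Rightarrow> 'a set \<Rightarrow> bool" where
  "concentrated \<nu> E \<longleftrightarrow> (\<exists>B\<in>sets borel. - E \<subseteq> B \<and> emeasure \<nu> B = 0)"

definition Cc :: "('a::topological_space \<Rightarrow> real) \<Rightarrow> bool" where
  "Cc f \<longleftrightarrow> continuous_on UNIV f \<and> compact (closure {x. f x \<noteq> 0})"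

definition en :: "('a \<Rightarrow> 'a \<Rightarrow> ennreal) \<Rightarrow> 'a measure \<Rightarrow> 'a measure \<Rightarrow> ennreal" where
  "en \<kappa> \<mu> \<nu> = (\<integral>\<^sup>+ x. (\<integral>\<^sup>+ y. \<kappa> x y \<partial>\<nu>) \<partial>\<mu>)"

definition senergy :: "('a \<Rightarrow> 'a \<Rightarrow> ennreal) \<Rightarrow> 'a smeasure \<Rightarrow> 'a smeasure \<Rightarrow> ereal" where
  "senergy \<kappa> \<nu> \<nu>' =
     (enn2ereal (en \<kappa> (fst \<nu>) (fst \<nu>')) + enn2ereal (en \<kappa> (snd \<nu>) (snd \<nu>')))
   - (enn2ereal (en \<kappa> (fst \<nu>) (snd \<nu>')) + enn2ereal (en \<kappa> (snd \<nu>) (fst \<nu>')))"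

definition pot :: "('a \<Rightarrow> 'a \<Rightarrow> ennreal) \<Rightarrow> 'a \<Rightarrow> 'a smeasure \<Rightarrow> ereal" where
  "pot \<kappa> x \<nu> = enn2ereal (\<integral>\<^sup>+ y. \<kappa> x y \<partial>fst \<nu>) - enn2ereal (\<integral>\<^sup>+ y. \<kappa> x y \<partial>snd \<nu>)"

definition energy_space :: "('a::t2_space \<Rightarrow> 'a \<Rightarrow> ennreal) \<Rightarrow> 'a smeasure \<Rightarrow> bool" where
  "energy_space \<kappa> \<nu> \<longleftrightarrow> signed_radon \<nu> \<and>
     en \<kappa> (fst \<nu>) (fst \<nu>) + en \<kappa> (snd \<nu>) (snd \<nu>) < \<infinity> \<and> en \<kappa> (fst \<nu>) (snd \<nu>) < \<infinity>"

definition Eplus :: "('a::t2_space \<Rightarrow> 'a \<Rightarrow> ennreal) \<Rightarrow> 'a measure \<Rightarrow> bool" where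
  "Eplus \<kappa> \<mu> \<longleftrightarrow> radon \<mu> \<and> en \<kappa> \<mu> \<mu> < \<infinity>"

definition pdist :: "('a \<Rightarrow> 'a \<Rightarrow> ennreal) \<Rightarrow> 'a measure \<Rightarrow> 'a measure \<Rightarrow> real" where
  "pdist \<kappa> \<mu> \<nu> = sqrt (enn2real (en \<kappa> \<mu> \<mu>) + enn2real (en \<kappa> \<nu> \<nu>) - 2 * enn2real (en \<kappa> \<mu> \<nu>))"

text \<open>Interior capacity \<open>C(E) = 1 / inf {\<kappa>(\<nu>,\<nu>) : \<nu> \<in> \<E>\<^sup>+_E, \<nu>(E) = 1}\<close>
(with \<open>1/0 = \<infinity>\<close>, \<open>1/\<infinity> = 0\<close>, \<open>inf \<emptyset> = \<infinity>\<close>).\<close>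
definition capacity :: "('a::t2_space \<Rightarrow> 'a \<Rightarrow> ennreal) \<Rightarrow> 'a set \<Rightarrow> ennreal" where
  "capacity \<kappa> E = 1 / (INF \<nu>\<in>{\<nu>. Eplus \<kappa> \<nu> \<and> concentrated \<nu> E \<and> emeasure \<nu> UNIV = 1}. en \<kappa> \<nu> \<nu>)"

definition nearly_everywhere :: "('a::t2_space \<Rightarrow> 'a \<Rightarrow> ennreal) \<Rightarrow> 'a set \<Rightarrow> ('a \<Rightarrow> bool) \<Rightarrow> bool" where
  "nearly_everywhere \<kappa> S P \<longleftrightarrow> (\<exists>N. capacity \<kappa> N = 0 \<and> (\<forall>x\<in>S - N. P x))"

definition strictly_pos_def :: "('a::t2_space \<Rightarrow> 'a \<Rightarrow> ennreal) \<Rightarrow> bool" where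
  "strictly_pos_def \<kappa> \<longleftrightarrow> (\<forall>\<nu>. energy_space \<kappa> \<nu> \<longrightarrow>
      senergy \<kappa> \<nu> \<nu> \<ge> 0 \<and>
      (senergy \<kappa> \<nu> \<nu> = 0 \<longrightarrow> emeasure (fst \<nu>) UNIV = 0 \<and> emeasure (snd \<nu>) UNIV = 0))"

text \<open>Nets are represented by filters. \<open>\<mu>\<^sub>0\<close> is a vague cluster point of \<open>F\<close>.\<close>
definition vague_cluster :: "'a::topological_space measure filter \<Rightarrow> 'a measure \<Rightarrow> bool" where
  "vague_cluster F \<mu>0 \<longleftrightarrow> (\<forall>fs. finite fs \<longrightarrow> (\<forall>f\<in>fs. Cc f) \<longrightarrow> (\<forall>\<epsilon>>0.
      (\<exists>\<^sub>F \<mu> in F. \<forall>f\<in>fs. \<bar>integral\<^sup>L \<mu> f - integral\<^sup>L \<mu>0 f\<bar> < \<epsilon>)))"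

definition strong_cauchy :: "('a \<Rightarrow> 'a \<Rightarrow> ennreal) \<Rightarrow> 'a measure filter \<Rightarrow> bool" where
  "strong_cauchy \<kappa> F \<longleftrightarrow> (\<forall>\<epsilon>>0. \<forall>\<^sub>F p in F \<times>\<^sub>F F. pdist \<kappa> (fst p) (snd p) < \<epsilon>)"

definition consistent :: "('a::t2_space \<Rightarrow> 'a \<Rightarrow> ennreal) \<Rightarrow> bool" where
  "consistent \<kappa> \<longleftrightarrow> (\<forall>F. (\<forall>\<^sub>F \<mu> in F. Eplus \<kappa> \<mu>) \<longrightarrow> strong_cauchy \<kappa> F \<longrightarrow>
     (\<forall>\<mu>0. radon \<mu>0 \<longrightarrow> vague_cluster F \<mu>0 \<longrightarrow>
        Eplus \<kappa> \<mu>0 \<and> ((\<lambda>\<mu>. pdist \<kappa> \<mu> \<mu>0) \<longlongrightarrow> 0) F))"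

definition gen_max_principle :: "('a::t2_space \<Rightarrow> 'a \<Rightarrow> ennreal) \<Rightarrow> real \<Rightarrow> bool" where
  "gen_max_principle \<kappa> h \<longleftrightarrow> (\<forall>\<nu> c. Eplus \<kappa> \<nu> \<longrightarrow> c \<ge> 0 \<longrightarrow>
     (AE x in \<nu>. (\<integral>\<^sup>+ y. \<kappa> x y \<partial>\<nu>) \<le> ennreal c) \<longrightarrow>
     (\<forall>x. (\<integral>\<^sup>+ y. \<kappa> x y \<partial>\<nu>) \<le> ennreal (h * c)))"

definition condenser ::
  "('a::t2_space \<Rightarrow> 'a \<Rightarrow> ennreal) \<Rightarrow> nat set \<Rightarrow> nat set \<Rightarrow> (nat \<Rightarrow> 'a set) \<Rightarrow> bool" where
  "condenser \<kappa> Ip In A \<longleftrightarrow> Ip \<inter> In = {} \<and>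
     (\<forall>i\<in>Ip \<union> In. closed (A i) \<and> A i \<noteq> {}) \<and>
     (\<forall>K. compact K \<longrightarrow> finite {i\<in>Ip \<union> In. A i \<inter> K \<noteq> {}}) \<and>
     (\<forall>i\<in>Ip. \<forall>j\<in>In. A i \<inter> A j = {}) \<and>
     (SUP p\<in>(\<Union>i\<in>Ip. A i) \<times> (\<Union>j\<in>In. A j). \<kappa> (fst p) (snd p)) < \<infinity>"

definition summeas :: "(nat \<Rightarrow> 'a::topological_space measure) \<Rightarrow> nat set \<Rightarrow> 'a measure" where
  "summeas \<mu> J = measure_of UNIV (sets borel) (\<lambda>B. \<Sum>i. if i \<in> J then emeasure (\<mu> i) B else 0)"

text \<open>\<open>R\<mu> = \<Sum> \<alpha>\<^sub>i \<mu>\<^sup>i\<close>, as (positive part, negative part).\<close>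
definition Rmeas :: "nat set \<Rightarrow> nat set \<Rightarrow> (nat \<Rightarrow> 'a::topological_space measure) \<Rightarrow> 'a smeasure" where
  "Rmeas Ip In \<mu> = (summeas \<mu> Ip, summeas \<mu> In)"

text \<open>Finite vector energy: the (unordered, countable) series
\<open>\<Sum>\<^sub>i\<^sub>,\<^sub>j \<alpha>\<^sub>i\<alpha>\<^sub>j \<kappa>(\<mu>\<^sup>i,\<mu>\<^sup>j)\<close> has finite positive and finite negative part.\<close>
definition finite_vec_energy ::
  "('a \<Rightarrow> 'a \<Rightarrow> ennreal) \<Rightarrow> nat set \<Rightarrow> nat set \<Rightarrow> (nat \<Rightarrow> 'a measure) \<Rightarrow> bool" where
  "finite_vec_energy \<kappa> Ip In \<mu> \<longleftrightarrow>
     (\<Sum>\<^sub>\<infinity> p\<in>(Ip \<times> Ip) \<union> (In \<times> In). en \<kappa> (\<mu> (fst p)) (\<mu> (snd p))) < \<infinity> \<and>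
     (\<Sum>\<^sub>\<infinity> p\<in>(Ip \<times> In) \<union> (In \<times> Ip). en \<kappa> (\<mu> (fst p)) (\<mu> (snd p))) < \<infinity>"

definition admissible ::
  "('a::t2_space \<Rightarrow> 'a \<Rightarrow> ennreal) \<Rightarrow> nat set \<Rightarrow> nat set \<Rightarrow> (nat \<Rightarrow> 'a set) \<Rightarrow> (nat \<Rightarrow> real)
    \<Rightarrow> ('a \<Rightarrow> real) \<Rightarrow> (nat \<Rightarrow> 'a measure) set" where
  "admissible \<kappa> Ip In A a g = {\<mu>.
     (\<forall>i\<in>Ip \<union> In. radon (\<mu> i) \<and> concentrated (\<mu> i) (A i) \<and>
        (\<integral>\<^sup>+ x. ennreal (g x) * indicator (A i) x \<partial>\<mu> i) = ennreal (a i)) \<and>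
     finite_vec_energy \<kappa> Ip In \<mu>}"

definition Gchi ::
  "('a::t2_space \<Rightarrow> 'a \<Rightarrow> ennreal) \<Rightarrow> 'a smeasure \<Rightarrow> nat set \<Rightarrow> nat set \<Rightarrow> (nat \<Rightarrow> 'a measure) \<Rightarrow> ereal" where
  "Gchi \<kappa> chi Ip In \<mu> = senergy \<kappa> (Rmeas Ip In \<mu>) (Rmeas Ip In \<mu>) + 2 * senergy \<kappa> chi (Rmeas Ip In \<mu>)"

definition Ginf ::
  "('a::t2_space \<Rightarrow> 'a \<Rightarrow> ennreal) \<Rightarrow> 'a smeasure \<Rightarrow> nat set \<Rightarrow> nat set \<Rightarrow> (nat \<Rightarrow> 'a set)
    \<Rightarrow> (nat \<Rightarrow> real) \<Rightarrow> ('a \<Rightarrow> real) \<Rightarrow> ereal" where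
  "Ginf \<kappa> chi Ip In A a g = (INF \<mu>\<in>admissible \<kappa> Ip In A a g. Gchi \<kappa> chi Ip In \<mu>)"

definition weight_ok ::
  "('a::t2_space \<Rightarrow> 'a \<Rightarrow> ennreal) \<Rightarrow> nat set \<Rightarrow> (nat \<Rightarrow> 'a set) \<Rightarrow> ('a \<Rightarrow> real) \<Rightarrow> bool" where
  "weight_ok \<kappa> I A g \<longleftrightarrow> continuous_on (\<Union>i\<in>I. A i) g \<and>
     (\<exists>c>0. \<forall>x\<in>(\<Union>i\<in>I. A i). c \<le> g x) \<and>
     (\<forall>i\<in>I. bdd_above (g ` A i) \<or>
        (\<exists>r>1. \<exists>\<nu>. energy_space \<kappa> \<nu> \<and>
           nearly_everywhere \<kappa> (A i) (\<lambda>x. ereal (g x powr r) \<le> pot \<kappa> x \<nu>)))"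

definition compact_subsets_filter :: "'a::topological_space set \<Rightarrow> 'a set filter" where
  "compact_subsets_filter S =
     (INF K\<in>{K. compact K \<and> K \<subseteq> S}. principal {K'. compact K' \<and> K \<subseteq> K' \<and> K' \<subseteq> S})"

end

theory Submission
  imports Defs
begin


lemma summeas_sets[simp]: "sets (summeas \<mu> J) = sets borel"
  unfolding summeas_def
  by (subst sets_measure_of) (auto simp: sets.sigma_sets_eq[of borel, simplified])

lemma summeas_space[simp]: "space (summeas \<mu> J) = UNIV"
  unfolding summeas_def by (simp add: space_measure_of_conv)

lemma ennreal_suminf_swap:
  fixes f :: "nat \<Rightarrow> nat \<Rightarrow> ennreal"
  shows "(\<Sum>n. \<Sum>i. f n i) = (\<Sum>i. \<Sum>n. f n i)"
proof -
  have "(\<Sum>n. \<Sum>i. f n i) = (\<integral>\<^sup>+n. (\<Sum>i. f n i) \<partial>count_space UNIV)"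
    by (simp add: nn_integral_count_space_nat)
  also have "\<dots> = (\<Sum>i. \<integral>\<^sup>+n. f n i \<partial>count_space UNIV)"
    by (rule nn_integral_suminf) auto
  also have "\<dots> = (\<Sum>i. \<Sum>n. f n i)"
    by (simp add: nn_integral_count_space_nat)
  finally show ?thesis .
qed

lemma summeas_emeasure:
  assumes "\<And>i. i \<in> J \<Longrightarrow> sets (\<mu> i) = sets borel" and "B \<in> sets borel"
  shows "emeasure (summeas \<mu> J) B = (\<Sum>i. if i \<in> J then emeasure (\<mu> i) B else 0)"
  unfolding summeas_def
proof (rule emeasure_measure_of_sigma)
  show "sigma_algebra UNIV (sets borel)"
    by (metis sets.sigma_algebra_axioms space_borel)
  show "positive (sets borel) (\<lambda>B. \<Sum>i. if i \<in> J then emeasure (\<mu> i) B else 0)"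
  proof -
    have "\<And>i. (if i\<in>J then emeasure (\<mu> i) {} else 0) = (0::ennreal)" by simp
    then show ?thesis unfolding positive_def by simp
  qed
  show "countably_additive (sets borel) (\<lambda>B. \<Sum>i. if i \<in> J then emeasure (\<mu> i) B else 0)"
  proof (clarsimp simp: countably_additive_def)
    fix A :: "nat \<Rightarrow> 'a set"
    assume A: "range A \<subseteq> sets borel" "disjoint_family A"
    have "(\<Sum>n. \<Sum>i. if i \<in> J then emeasure (\<mu> i) (A n) else 0)
        = (\<Sum>i. \<Sum>n. if i \<in> J then emeasure (\<mu> i) (A n) else 0)"
      by (rule ennreal_suminf_swap)
    also have "\<dots> = (\<Sum>i. if i \<in> J then emeasure (\<mu> i) (\<Union>n. A n) else 0)"
    proof (rule suminf_cong)
      fix i show "(\<Sum>n. if i \<in> J then emeasure (\<mu> i) (A n) else 0) = (if i \<in> J then emeasure (\<mu> i) (\<Union>n. A n) else 0)"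
        using A assms(1)[of i] by (auto intro: suminf_emeasure)
    qed
    finally show "(\<Sum>n. \<Sum>i. if i \<in> J then emeasure (\<mu> i) (A n) else 0) =
         (\<Sum>i. if i \<in> J then emeasure (\<mu> i) (\<Union>n. A n) else 0)" .
  qed
qed (use assms in auto)



lemma nn_integral_le_cmeasure:
  assumes sets: "sets M1 = sets M2"
    and le: "\<And>B. B \<in> sets M2 \<Longrightarrow> emeasure M1 B \<le> c * emeasure M2 B"
  shows "integral\<^sup>N M1 f \<le> c * integral\<^sup>N M2 f"
proof -
  have sp: "space M1 = space M2" using sets by (rule sets_eq_imp_space_eq)
  show ?thesis
    unfolding nn_integral_def
  proof (rule SUP_least, clarify)
    fix g assume g: "simple_function M1 g" "g \<le> f"
    then have g2: "simple_function M2 g"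
      using simple_function_cong_algebra[OF sets sp, of g] by blast
    have "integral\<^sup>S M1 g = (\<Sum>x \<in> g ` space M2. x * emeasure M1 (g -` {x} \<inter> space M2))"
      unfolding simple_integral_def sp ..
    also have "\<dots> \<le> (\<Sum>x \<in> g ` space M2. x * (c * emeasure M2 (g -` {x} \<inter> space M2)))"
      using g2 by (intro sum_mono mult_left_mono le) (auto simp: simple_function_def)
    also have "\<dots> = c * integral\<^sup>S M2 g"
      unfolding simple_integral_def sum_distrib_left by (simp add: ac_simps)
    also have "\<dots> \<le> c * (SUP g \<in> {g. simple_function M2 g \<and> g \<le> f}. integral\<^sup>S M2 g)"
      using g2 g by (intro mult_left_mono SUP_upper) auto
    finally show "integral\<^sup>S M1 g \<le> c * (SUP g \<in> {g. simple_function M2 g \<and> g \<le> f}. integral\<^sup>S M2 g)" .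
  qed
qed

lemma nn_integral_le_measure:
  assumes "sets M1 = sets M2" "\<And>B. B \<in> sets M2 \<Longrightarrow> emeasure M1 B \<le> emeasure M2 B"
  shows "integral\<^sup>N M1 f \<le> integral\<^sup>N M2 f"
  using nn_integral_le_cmeasure[of M1 M2 1 f] assms by simp

lemma nn_integral_SUP_measure:
  assumes sets: "\<And>n. sets (M n) = sets N"
    and inc: "\<And>B. B \<in> sets N \<Longrightarrow> incseq (\<lambda>n. emeasure (M n) B)"
    and sup: "\<And>B. B \<in> sets N \<Longrightarrow> (SUP n. emeasure (M n) B) = emeasure N B"
  shows "(SUP n. integral\<^sup>N (M n) f) = integral\<^sup>N N f"
proof -
  have sp: "\<And>n. space (M n) = space N" using sets by (rule sets_eq_imp_space_eq)
  have sf: "\<And>n g. simple_function (M n) g = simple_function N g"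
    using simple_function_cong_algebra[OF sets sp] by blast
  have si: "(SUP n. integral\<^sup>S (M n) g) = integral\<^sup>S N g" if g: "simple_function N g" for g
  proof -
    have fin: "finite (g ` space N)" using g by (simp add: simple_function_def)
    have meas: "\<And>x. g -` {x} \<inter> space N \<in> sets N" using g by (simp add: simple_functionD)
    have "(SUP n. integral\<^sup>S (M n) g) = (SUP n. \<Sum>x \<in> g ` space N. x * emeasure (M n) (g -` {x} \<inter> space N))"
      unfolding simple_integral_def sp ..
    also have "\<dots> = (\<Sum>x \<in> g ` space N. SUP n. x * emeasure (M n) (g -` {x} \<inter> space N))"
      by (rule ennreal_SUP_sum) (auto simp: incseq_def intro!: mult_left_mono incseqD[OF inc[OF meas]])
    also have "\<dots> = (\<Sum>x \<in> g ` space N. x * emeasure N (g -` {x} \<inter> space N))"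
      by (intro sum.cong refl) (simp add: SUP_mult_left_ennreal[symmetric] sup[OF meas])
    finally show ?thesis unfolding simple_integral_def .
  qed
  have "(SUP n. integral\<^sup>N (M n) f) = (SUP n. SUP g \<in> {g. simple_function N g \<and> g \<le> f}. integral\<^sup>S (M n) g)"
    unfolding nn_integral_def sf ..
  also have "\<dots> = (SUP g \<in> {g. simple_function N g \<and> g \<le> f}. SUP n. integral\<^sup>S (M n) g)"
    by (rule SUP_commute)
  also have "\<dots> = integral\<^sup>N N f"
    unfolding nn_integral_def by (intro SUP_cong refl) (simp add: si)
  finally show ?thesis .
qed



definition cnt :: "nat \<Rightarrow> real \<Rightarrow> real" where
  "cnt N m = (\<Sum>k\<in>{1..N}. if real k < m then 1 else 0)"

lemma cnt_bounds0: "0 \<le> m \<Longrightarrow> cnt N m \<le> m \<and> cnt N m \<le> real N \<and> min (real N) (m - 1) \<le> cnt N m"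
proof (induction N)
  case 0 then show ?case by (simp add: cnt_def)
next
  case (Suc N)
  have eq: "cnt (Suc N) m = cnt N m + (if real (Suc N) < m then 1 else 0)"
    unfolding cnt_def by (simp add: add.commute)
  show ?case using Suc unfolding eq by (auto split: if_splits)
qed

lemma cnt_bounds: "0 \<le> m \<Longrightarrow> cnt N m \<le> m \<and> min (real N) (m - 1) \<le> cnt N m"
  using cnt_bounds0 by blast

definition Fn :: "nat \<Rightarrow> ennreal \<Rightarrow> ennreal" where
  "Fn n z = (\<Sum>k\<in>{1..n*n}. ennreal (1 / real n) * indicator {w. ennreal (real k / real n) < w} z)"

lemma Fn_ennreal:
  assumes "0 \<le> r" "0 < n"
  shows "Fn n (ennreal r) = ennreal (cnt (n*n) (real n * r) / real n)"
proof -
  have "Fn n (ennreal r) = (\<Sum>k\<in>{1..n*n}. ennreal (1 / real n * (if real k < real n * r then 1 else 0)))"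
    unfolding Fn_def
  proof (intro sum.cong refl)
    fix k
    have "(real k / real n < r) = (real k < real n * r)"
      using assms by (simp add: divide_less_eq mult.commute)
    then show "ennreal (1 / real n) * indicator {w. ennreal (real k / real n) < w} (ennreal r) =
          ennreal (1 / real n * (if real k < real n * r then 1 else 0))"
      using assms by (auto simp: indicator_def ennreal_less_iff)
  qed
  also have "\<dots> = ennreal (\<Sum>k\<in>{1..n*n}. 1 / real n * (if real k < real n * r then 1 else 0))"
    by (rule sum_ennreal) auto
  also have "\<dots> = ennreal (cnt (n*n) (real n * r) / real n)"
    unfolding cnt_def sum_distrib_left[symmetric] by simp
  finally show ?thesis .
qed

lemma Fn_top: "0 < n \<Longrightarrow> Fn n top = of_nat n"
proof -
  assume n: "0 < n"
  have "Fn n top = (\<Sum>k\<in>{1..n*n}. ennreal (1 / real n))"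
    unfolding Fn_def by (intro sum.cong refl) (simp add: indicator_def)
  also have "\<dots> = ennreal (real (n*n) * (1 / real n))"
    by (simp add: ennreal_of_nat_eq_real_of_nat ennreal_mult[symmetric])
  also have "\<dots> = of_nat n" using n by (simp add: ennreal_of_nat_eq_real_of_nat)
  finally show ?thesis .
qed

lemma Fn_le: "Fn n z \<le> z"
proof (cases "n = 0")
  case True then show ?thesis by (simp add: Fn_def)
next
  case False
  show ?thesis
  proof (cases z)
    case (real r)
    have "cnt (n*n) (real n * r) \<le> real n * r" using cnt_bounds[of "real n * r"] real by simp
    then have "cnt (n*n) (real n * r) / real n \<le> r" using False by (simp add: divide_le_eq mult.commute)
    then show ?thesis using real False Fn_ennreal[of r n] by (simp add: ennreal_leI)
  next
    case top then show ?thesis by simp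
  qed
qed

lemma Fn_liminf: "z \<le> liminf (\<lambda>n. Fn n z)"
proof (unfold le_Liminf_iff, intro allI impI)
  fix y assume y: "y < z"
  show "\<forall>\<^sub>F n in sequentially. y < Fn n z"
  proof (cases z)
    case top
    obtain y' where y': "y = ennreal y'" "0 \<le> y'" using y top by (cases y) auto
    obtain N :: nat where N: "y' < real N" using reals_Archimedean2 by blast
    show ?thesis
      unfolding eventually_sequentially
    proof (intro exI[of _ "Suc N"] allI impI)
      fix n assume "Suc N \<le> n"
      then have "y' < real n" using N by simp
      then show "y < Fn n z" using top y' \<open>Suc N \<le> n\<close>
        by (simp add: Fn_top ennreal_of_nat_eq_real_of_nat ennreal_less_iff)
    qed
  next
    case (real r)
    obtain y' where y': "y = ennreal y'" "0 \<le> y'" "y' < r" using y real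
      by (cases y) (auto simp: ennreal_less_iff)
    obtain N :: nat where N: "max (y' + 1) (1 / (r - y')) < real N" using reals_Archimedean2 by blast
    show ?thesis
      unfolding eventually_sequentially
    proof (intro exI[of _ "N"] allI impI)
      fix n assume nN: "N \<le> n"
      then have n1: "y' + 1 < real n" "1 / (r - y') < real n" using N by auto
      have npos: "0 < real n" using n1 y' by linarith
      have "1 / real n < r - y'" using n1(2) y' npos
        by (metis divide_less_eq mult.commute diff_gt_0_iff_gt)
      have b: "min (real (n*n)) (real n * r - 1) \<le> cnt (n*n) (real n * r)"
        using cnt_bounds[of "real n * r" "n*n"] real npos by simp
      have "y' < cnt (n*n) (real n * r) / real n"
      proof (cases "real (n*n) \<le> real n * r - 1")
        case True
        then have "real (n*n) \<le> cnt (n*n) (real n * r)" using b by simp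
        then have "real n \<le> cnt (n*n) (real n * r) / real n" using npos by (simp add: le_divide_eq)
        then show ?thesis using n1 by linarith
      next
        case False
        then have "real n * r - 1 \<le> cnt (n*n) (real n * r)" using b by simp
        then have "(real n * r - 1) / real n \<le> cnt (n*n) (real n * r) / real n"
          using npos by (simp add: divide_right_mono)
        moreover have "(real n * r - 1) / real n = r - 1 / real n" using npos by (simp add: field_simps)
        ultimately show ?thesis using \<open>1 / real n < r - y'\<close> by linarith
      qed
      then show "y < Fn n z" using real y' npos Fn_ennreal[of r n]
        by (simp add: ennreal_less_iff)
    qed
  qed
qed



definition open_ireg :: "'a::topological_space measure \<Rightarrow> bool" where
  "open_ireg \<nu> \<longleftrightarrow> (\<forall>U. open U \<longrightarrow> emeasure \<nu> U = (SUP K\<in>{K. compact K \<and> K \<subseteq> U}. emeasure \<nu> K))"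

lemma lsc_section_open:
  fixes \<kappa> :: "'a::topological_space \<Rightarrow> 'a \<Rightarrow> ennreal"
  assumes lsc: "\<forall>t. open {p :: 'a \<times> 'a. t < \<kappa> (fst p) (snd p)}"
  shows "open {y. s < \<kappa> x y}"
proof -
  have "{y. s < \<kappa> x y} = (\<lambda>y. (x, y)) -` {p. s < \<kappa> (fst p) (snd p)}" by auto
  moreover have "continuous_on UNIV (\<lambda>y::'a. (x, y))" by (intro continuous_intros)
  ultimately show ?thesis using open_vimage[OF lsc[rule_format, of s], of "\<lambda>y. (x, y)"] by simp
qed

lemma lsc_section_measurable:
  fixes \<kappa> :: "'a::topological_space \<Rightarrow> 'a \<Rightarrow> ennreal"
  assumes lsc: "\<forall>t. open {p :: 'a \<times> 'a. t < \<kappa> (fst p) (snd p)}"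
    and sets: "sets \<nu> = sets borel"
  shows "\<kappa> x \<in> borel_measurable \<nu>"
proof -
  have "\<kappa> x \<in> borel_measurable borel"
    by (rule borel_measurableI_greater) (simp add: borel_open lsc_section_open[OF lsc])
  then show ?thesis using sets measurable_cong_sets by blast
qed

lemma level_open:
  fixes \<kappa> :: "'a::t2_space \<Rightarrow> 'a \<Rightarrow> ennreal"
  assumes lsc: "\<forall>t. open {p :: 'a \<times> 'a. t < \<kappa> (fst p) (snd p)}"
    and sets: "sets \<nu> = sets borel" and ireg: "open_ireg \<nu>"
  shows "open {x. t < emeasure \<nu> {y. s < \<kappa> x y}}"
proof (rule Topological_Spaces.openI)
  fix x0 assume "x0 \<in> {x. t < emeasure \<nu> {y. s < \<kappa> x y}}"
  then have t: "t < emeasure \<nu> {y. s < \<kappa> x0 y}" by simp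
  have op: "\<And>x. open {y. s < \<kappa> x y}" by (rule lsc_section_open[OF lsc])
  then have "emeasure \<nu> {y. s < \<kappa> x0 y} = (SUP K\<in>{K. compact K \<and> K \<subseteq> {y. s < \<kappa> x0 y}}. emeasure \<nu> K)"
    using ireg unfolding open_ireg_def by blast
  with t obtain K where K: "compact K" "K \<subseteq> {y. s < \<kappa> x0 y}" "t < emeasure \<nu> K"
    by (auto simp: less_SUP_iff)
  have "{x0} \<times> K \<subseteq> {p. s < \<kappa> (fst p) (snd p)}" using K by auto
  moreover have W: "open {p. s < \<kappa> (fst p) (snd p)}" using lsc by blast
  ultimately obtain X0 where X0: "x0 \<in> X0" "open X0" "X0 \<times> K \<subseteq> {p. s < \<kappa> (fst p) (snd p)}"
    using Elementary_Topology.tube_lemma[OF K(1) W] by blast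
  show "\<exists>T. open T \<and> x0 \<in> T \<and> T \<subseteq> {x. t < emeasure \<nu> {y. s < \<kappa> x y}}"
  proof (intro exI[of _ X0] conjI)
    show "X0 \<subseteq> {x. t < emeasure \<nu> {y. s < \<kappa> x y}}"
    proof
      fix x assume x: "x \<in> X0"
      then have "K \<subseteq> {y. s < \<kappa> x y}" using X0(3) by auto
      moreover have "{y. s < \<kappa> x y} \<in> sets \<nu>"
        unfolding sets by (rule borel_open[OF op])
      ultimately have "emeasure \<nu> K \<le> emeasure \<nu> {y. s < \<kappa> x y}"
        by (rule emeasure_mono)
      then show "x \<in> {x. t < emeasure \<nu> {y. s < \<kappa> x y}}" using K(3) by auto
    qed
  qed (use X0 in auto)
qed

lemma level_measurable:
  fixes \<kappa> :: "'a::t2_space \<Rightarrow> 'a \<Rightarrow> ennreal"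
  assumes lsc: "\<forall>t. open {p :: 'a \<times> 'a. t < \<kappa> (fst p) (snd p)}"
    and sets: "sets \<nu> = sets borel" and ireg: "open_ireg \<nu>"
  shows "(\<lambda>x. emeasure \<nu> {y. s < \<kappa> x y}) \<in> borel_measurable borel"
  by (rule borel_measurableI_greater) (simp add: borel_open level_open[OF assms])

lemma pot_measurable:
  fixes \<kappa> :: "'a::t2_space \<Rightarrow> 'a \<Rightarrow> ennreal"
  assumes lsc: "\<forall>t. open {p :: 'a \<times> 'a. t < \<kappa> (fst p) (snd p)}"
    and sets: "sets \<nu> = sets borel" and ireg: "open_ireg \<nu>"
  shows "(\<lambda>x. \<integral>\<^sup>+y. \<kappa> x y \<partial>\<nu>) \<in> borel_measurable borel"
proof -
  have km: "\<And>x. \<kappa> x \<in> borel_measurable \<nu>" by (rule lsc_section_measurable[OF lsc sets])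
  have opn: "\<And>x s. {y. s < \<kappa> x y} \<in> sets \<nu>"
    using sets borel_open[OF lsc_section_open[OF lsc]] by simp
  have eq: "(\<integral>\<^sup>+y. Fn n (\<kappa> x y) \<partial>\<nu>) =
      (\<Sum>k\<in>{1..n*n}. ennreal (1 / real n) * emeasure \<nu> {y. ennreal (real k / real n) < \<kappa> x y})" for n x
  proof -
    have "(\<integral>\<^sup>+y. Fn n (\<kappa> x y) \<partial>\<nu>) =
        (\<integral>\<^sup>+y. (\<Sum>k\<in>{1..n*n}. ennreal (1 / real n) * indicator {y. ennreal (real k / real n) < \<kappa> x y} y) \<partial>\<nu>)"
      unfolding Fn_def by (intro nn_integral_cong sum.cong refl) (simp add: indicator_def)
    also have "\<dots> = (\<Sum>k\<in>{1..n*n}. \<integral>\<^sup>+y. ennreal (1 / real n) * indicator {y. ennreal (real k / real n) < \<kappa> x y} y \<partial>\<nu>)"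
      by (rule nn_integral_sum) (use opn in auto)
    also have "\<dots> = (\<Sum>k\<in>{1..n*n}. ennreal (1 / real n) * emeasure \<nu> {y. ennreal (real k / real n) < \<kappa> x y})"
      by (intro sum.cong refl nn_integral_cmult_indicator opn)
    finally show ?thesis .
  qed
  have Fm: "(\<lambda>x. \<integral>\<^sup>+y. Fn n (\<kappa> x y) \<partial>\<nu>) \<in> borel_measurable borel" for n
    unfolding eq
    by (intro borel_measurable_sum borel_measurable_times_ennreal borel_measurable_const
          level_measurable[OF lsc sets ireg])
  have sup: "(\<integral>\<^sup>+y. \<kappa> x y \<partial>\<nu>) = (SUP n. \<integral>\<^sup>+y. Fn n (\<kappa> x y) \<partial>\<nu>)" for x
  proof (rule antisym)
    have Fnm: "(\<lambda>y. Fn n (\<kappa> x y)) \<in> borel_measurable \<nu>" for n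
    proof -
      have "(\<lambda>y. Fn n (\<kappa> x y)) = (\<lambda>y. \<Sum>k\<in>{1..n*n}. ennreal (1 / real n) * indicator {y. ennreal (real k / real n) < \<kappa> x y} y)"
        unfolding Fn_def by (intro ext sum.cong refl) (simp add: indicator_def)
      then show ?thesis
        by (simp only:) (intro borel_measurable_sum borel_measurable_times_ennreal borel_measurable_const
             borel_measurable_indicator opn)
    qed
    have "(\<integral>\<^sup>+y. \<kappa> x y \<partial>\<nu>) \<le> (\<integral>\<^sup>+y. liminf (\<lambda>n. Fn n (\<kappa> x y)) \<partial>\<nu>)"
      by (intro nn_integral_mono Fn_liminf)
    also have "\<dots> \<le> liminf (\<lambda>n. \<integral>\<^sup>+y. Fn n (\<kappa> x y) \<partial>\<nu>)"
      by (rule nn_integral_liminf) (rule Fnm)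
    also have "\<dots> \<le> (SUP n. \<integral>\<^sup>+y. Fn n (\<kappa> x y) \<partial>\<nu>)"
      unfolding liminf_SUP_INF by (intro SUP_mono) (auto intro: INF_lower)
    finally show "(\<integral>\<^sup>+y. \<kappa> x y \<partial>\<nu>) \<le> (SUP n. \<integral>\<^sup>+y. Fn n (\<kappa> x y) \<partial>\<nu>)" .
    show "(SUP n. \<integral>\<^sup>+y. Fn n (\<kappa> x y) \<partial>\<nu>) \<le> (\<integral>\<^sup>+y. \<kappa> x y \<partial>\<nu>)"
      by (intro SUP_least nn_integral_mono Fn_le)
  qed
  show ?thesis
    unfolding sup by (intro borel_measurable_SUP Fm) simp
qed



lemma radon_open_ireg: "radon \<mu> \<Longrightarrow> open_ireg \<mu>"
  unfolding radon_def open_ireg_def by blast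

lemma compact_sets_borel: "compact (K::'a::t2_space set) \<Longrightarrow> K \<in> sets borel"
  by (simp add: borel_closed compact_imp_closed)

lemma summeas_open_ireg:
  fixes \<mu> :: "nat \<Rightarrow> 'a::t2_space measure"
  assumes rad: "\<And>i. i \<in> J \<Longrightarrow> radon (\<mu> i)"
  shows "open_ireg (summeas \<mu> J)"
  unfolding open_ireg_def
proof (intro allI impI)
  fix U :: "'a set" assume U: "open U"
  have sets: "\<And>i. i \<in> J \<Longrightarrow> sets (\<mu> i) = sets borel" using rad by (simp add: radon_def)
  let ?I = "{K. compact K \<and> K \<subseteq> U}"
  have "emeasure (summeas \<mu> J) U = (\<Sum>i. if i \<in> J then emeasure (\<mu> i) U else 0)"
    using U by (intro summeas_emeasure sets) auto
  also have "\<dots> = (\<Sum>i. SUP K\<in>?I. if i \<in> J then emeasure (\<mu> i) K else 0)"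
  proof (intro suminf_cong)
    fix i
    have ne: "?I \<noteq> {}" by (metis (mono_tags, lifting) compact_empty empty_iff empty_subsetI mem_Collect_eq)
    show "(if i \<in> J then emeasure (\<mu> i) U else 0) = (SUP K\<in>?I. if i \<in> J then emeasure (\<mu> i) K else 0)"
      using rad[of i] U ne by (auto simp: radon_def)
  qed
  also have "\<dots> = (SUP K\<in>?I. \<Sum>i. if i \<in> J then emeasure (\<mu> i) K else 0)"
  proof (rule ennreal_suminf_SUP_eq_directed)
    fix N :: "nat set" and K1 K2 assume K: "K1 \<in> ?I" "K2 \<in> ?I" "finite N"
    show "\<exists>k\<in>?I. \<forall>n\<in>N. (if n \<in> J then emeasure (\<mu> n) K1 else 0) \<le> (if n \<in> J then emeasure (\<mu> n) k else 0) \<and>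
                      (if n \<in> J then emeasure (\<mu> n) K2 else 0) \<le> (if n \<in> J then emeasure (\<mu> n) k else 0)"
    proof (intro bexI[of _ "K1 \<union> K2"] ballI conjI)
      fix n assume "n \<in> N"
      have m: "K1 \<union> K2 \<in> sets borel" using K by (intro compact_sets_borel compact_Un) auto
      show "(if n \<in> J then emeasure (\<mu> n) K1 else 0) \<le> (if n \<in> J then emeasure (\<mu> n) (K1 \<union> K2) else 0)"
        using m sets[of n] by (auto intro!: emeasure_mono)
      show "(if n \<in> J then emeasure (\<mu> n) K2 else 0) \<le> (if n \<in> J then emeasure (\<mu> n) (K1 \<union> K2) else 0)"
        using m sets[of n] by (auto intro!: emeasure_mono)
    qed (use K in auto)
  qed
  also have "\<dots> = (SUP K\<in>?I. emeasure (summeas \<mu> J) K)"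
    by (intro SUP_cong refl summeas_emeasure[symmetric] sets compact_sets_borel) auto
  finally show "emeasure (summeas \<mu> J) U = (SUP K\<in>?I. emeasure (summeas \<mu> J) K)" .
qed



definition rs :: "'a::topological_space measure \<Rightarrow> real \<Rightarrow> 'a set \<Rightarrow> 'a measure" where
  "rs \<mu> c K = density \<mu> (\<lambda>x. ennreal c * indicator K x)"

lemma rs_sets[simp]: "sets (rs \<mu> c K) = sets \<mu>"
  unfolding rs_def by simp

lemma rs_emeasure:
  assumes "K \<in> sets \<mu>" "B \<in> sets \<mu>"
  shows "emeasure (rs \<mu> c K) B = ennreal c * emeasure \<mu> (K \<inter> B)"
proof -
  have "emeasure (rs \<mu> c K) B = (\<integral>\<^sup>+x. (ennreal c * indicator K x) * indicator B x \<partial>\<mu>)"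
    unfolding rs_def using assms by (intro emeasure_density) auto
  also have "\<dots> = (\<integral>\<^sup>+x. ennreal c * indicator (K \<inter> B) x \<partial>\<mu>)"
    by (intro nn_integral_cong) (simp add: indicator_def)
  also have "\<dots> = ennreal c * emeasure \<mu> (K \<inter> B)"
    using assms by (intro nn_integral_cmult_indicator) auto
  finally show ?thesis .
qed

lemma radon_rs:
  fixes \<mu> :: "'a::t2_space measure"
  assumes rad: "radon \<mu>" and K: "compact K" and c: "0 \<le> c"
  shows "radon (rs \<mu> c K)"
proof -
  have sets: "sets \<mu> = sets borel" using rad by (simp add: radon_def)
  have Km: "K \<in> sets \<mu>" using K sets compact_sets_borel by auto
  have Kfin: "emeasure \<mu> K < \<infinity>" using rad K by (simp add: radon_def)
  have outer: "\<And>B. B \<in> sets borel \<Longrightarrow> emeasure \<mu> B = (INF U\<in>{U. open U \<and> B \<subseteq> U}. emeasure \<mu> U)"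
    using rad by (simp add: radon_def)
  have em: "\<And>B. B \<in> sets borel \<Longrightarrow> emeasure (rs \<mu> c K) B = ennreal c * emeasure \<mu> (K \<inter> B)"
    using Km sets by (intro rs_emeasure) auto
  have finKB: "\<And>B. B \<in> sets borel \<Longrightarrow> emeasure \<mu> (K \<inter> B) < \<infinity>"
    using Kfin Km sets by (metis emeasure_mono inf_le1 le_less_trans sets.Int)
  have approxV: "\<exists>V. open V \<and> B \<subseteq> V \<and> emeasure \<mu> V < emeasure \<mu> B + ennreal e"
    if "B \<in> sets borel" "emeasure \<mu> B < \<infinity>" "0 < e" for B e
  proof -
    have "emeasure \<mu> B < emeasure \<mu> B + ennreal e"
      using that by (cases "emeasure \<mu> B") (auto simp: ennreal_plus[symmetric] ennreal_less_iff simp del: ennreal_plus)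
    then show ?thesis unfolding outer[OF that(1)] INF_less_iff by auto
  qed
  show ?thesis
    unfolding radon_def
  proof (intro conjI allI impI ballI)
    show "sets (rs \<mu> c K) = sets borel" using sets by simp
  next
    fix C :: "'a set" assume C: "compact C"
    have "emeasure (rs \<mu> c K) C = ennreal c * emeasure \<mu> (K \<inter> C)"
      using C by (intro em compact_sets_borel)
    also have "\<dots> < \<infinity>" using finKB[OF compact_sets_borel[OF C]]
      by (simp add: ennreal_mult_less_top)
    finally show "emeasure (rs \<mu> c K) C < \<infinity>" .
  next
    fix U :: "'a set" assume U: "open U"
    show "emeasure (rs \<mu> c K) U = (SUP C\<in>{C. compact C \<and> C \<subseteq> U}. emeasure (rs \<mu> c K) C)"
    proof (rule ennreal_approx_SUP)
      fix C assume "C \<in> {C. compact C \<and> C \<subseteq> U}"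
      then show "emeasure (rs \<mu> c K) C \<le> emeasure (rs \<mu> c K) U"
        using U sets compact_sets_borel by (intro emeasure_mono) auto
    next
      fix e :: real assume e: "0 < e"
      show "\<exists>C\<in>{C. compact C \<and> C \<subseteq> U}. emeasure (rs \<mu> c K) U \<le> emeasure (rs \<mu> c K) C + ennreal e"
      proof (cases "c = 0")
        case True
        show ?thesis
          by (rule bexI[of _ "{}"]) (use U True em in \<open>auto simp: borel_open\<close>)
      next
        case False
        then have cpos: "0 < c" using c by simp
        have KU: "K - U \<in> sets borel" using K U by (simp add: compact_sets_borel borel_open sets.Diff)
        have fKU: "emeasure \<mu> (K - U) < \<infinity>" using finKB[of "- U"] U
          by (simp add: Diff_eq borel_closed)
        obtain V where V: "open V" "K - U \<subseteq> V" "emeasure \<mu> V < emeasure \<mu> (K - U) + ennreal (e / c)"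
          using approxV[OF KU fKU, of "e / c"] e cpos by auto
        define C where "C = K - V"
        have Cc: "compact C" "C \<subseteq> U" using K V unfolding C_def
          by (auto intro: compact_diff)
        have Vm: "V \<in> sets \<mu>" using V sets borel_open by auto
        have KUm: "K - U \<in> sets \<mu>" using KU sets by simp
        have Cm: "C \<in> sets \<mu>" using Cc sets compact_sets_borel by auto
        have VKUm: "V \<inter> (K \<inter> U) \<in> sets \<mu>" using Vm Km U sets borel_open by auto
        have "emeasure \<mu> (K - U) + emeasure \<mu> (V \<inter> (K \<inter> U)) = emeasure \<mu> ((K - U) \<union> (V \<inter> (K \<inter> U)))"
          by (rule plus_emeasure) (use KUm VKUm in auto)
        also have "\<dots> \<le> emeasure \<mu> V" using V Vm by (intro emeasure_mono) auto
        also have "\<dots> < emeasure \<mu> (K - U) + ennreal (e / c)" by (rule V(3))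
        finally have small: "emeasure \<mu> (V \<inter> (K \<inter> U)) < ennreal (e / c)"
          using fKU by (simp add: ennreal_add_left_cancel_less)
        have "emeasure \<mu> (K \<inter> U) \<le> emeasure \<mu> (C \<union> (V \<inter> (K \<inter> U)))"
          using Cm VKUm unfolding C_def by (intro emeasure_mono) auto
        also have "\<dots> \<le> emeasure \<mu> C + emeasure \<mu> (V \<inter> (K \<inter> U))"
          using Cm VKUm by (intro emeasure_subadditive)
        also have "\<dots> \<le> emeasure \<mu> (K \<inter> C) + ennreal (e / c)"
          using small C_def by (intro add_mono) (auto simp: Int_absorb1 Diff_subset)
        finally have "ennreal c * emeasure \<mu> (K \<inter> U) \<le> ennreal c * (emeasure \<mu> (K \<inter> C) + ennreal (e / c))"
          by (rule mult_left_mono) simp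
        also have "\<dots> = ennreal c * emeasure \<mu> (K \<inter> C) + ennreal e"
          proof -
          have "ennreal c * ennreal (e / c) = ennreal e"
            using cpos e by (subst ennreal_mult[symmetric]) auto
          then show ?thesis by (simp add: distrib_left)
        qed
        finally show ?thesis
          using Cc U em[of U] em[of C] by (intro bexI[of _ C]) (auto simp: borel_open compact_sets_borel)
      qed
    qed
  next
    fix B :: "'a set" assume B: "B \<in> sets borel"
    show "emeasure (rs \<mu> c K) B = (INF U\<in>{U. open U \<and> B \<subseteq> U}. emeasure (rs \<mu> c K) U)"
    proof (rule ennreal_approx_INF)
      fix U assume "U \<in> {U. open U \<and> B \<subseteq> U}"
      then show "emeasure (rs \<mu> c K) B \<le> emeasure (rs \<mu> c K) U"
        using B sets by (intro emeasure_mono) (auto simp: borel_open)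
    next
      fix e :: real assume e: "0 < e"
      show "\<exists>U\<in>{U. open U \<and> B \<subseteq> U}. emeasure (rs \<mu> c K) U \<le> emeasure (rs \<mu> c K) B + ennreal e"
      proof (cases "c = 0")
        case True
        show ?thesis
          by (rule bexI[of _ "UNIV"]) (use B True em in \<open>auto\<close>)
      next
        case False
        then have cpos: "0 < c" using c by simp
        have KB: "K \<inter> B \<in> sets borel" using K B by (simp add: compact_sets_borel sets.Int)
        obtain W where W: "open W" "K \<inter> B \<subseteq> W" "emeasure \<mu> W < emeasure \<mu> (K \<inter> B) + ennreal (e / c)"
          using approxV[OF KB finKB[OF B], of "e / c"] e cpos by auto
        define U where "U = W \<union> - K"
        have U: "open U" "B \<subseteq> U" using W K unfolding U_def
          by (auto intro: open_Un compact_imp_closed)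
        have Um: "U \<in> sets borel" using U by (simp add: borel_open)
        have "emeasure \<mu> (K \<inter> U) \<le> emeasure \<mu> W"
          using W sets unfolding U_def by (intro emeasure_mono) (auto simp: borel_open)
        then have "ennreal c * emeasure \<mu> (K \<inter> U) \<le> ennreal c * (emeasure \<mu> (K \<inter> B) + ennreal (e / c))"
          using W(3) by (intro mult_left_mono) auto
        also have "\<dots> = ennreal c * emeasure \<mu> (K \<inter> B) + ennreal e"
          proof -
          have "ennreal c * ennreal (e / c) = ennreal e"
            using cpos e by (subst ennreal_mult[symmetric]) auto
          then show ?thesis by (simp add: distrib_left)
        qed
        finally show ?thesis
          using U em[OF Um] em[OF B] by (intro bexI[of _ U]) auto
      qed
    qed
  qed
qed



lemma infsum_cmult_ennreal: "infsum (\<lambda>p. c * f p) A = c * infsum f (A::'b set)" for f :: "'b \<Rightarrow> ennreal"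
proof -
  have "infsum (\<lambda>p. c * f p) A = (SUP F\<in>{F. finite F \<and> F\<subseteq>A}. sum (\<lambda>p. c * f p) F)"
    by (rule nonneg_infsum_complete) simp
  also have "\<dots> = (SUP F\<in>{F. finite F \<and> F\<subseteq>A}. c * sum f F)"
    by (simp add: sum_distrib_left)
  also have "\<dots> = c * (SUP F\<in>{F. finite F \<and> F\<subseteq>A}. sum f F)"
    by (simp add: SUP_mult_left_ennreal)
  also have "\<dots> = c * infsum f A"
    by (subst nonneg_infsum_complete) simp_all
  finally show ?thesis .
qed

lemma infsum_mono_ennreal: "(\<And>p. p \<in> A \<Longrightarrow> f p \<le> g p) \<Longrightarrow> infsum f A \<le> infsum g (A::'b set)"
  for f g :: "'b \<Rightarrow> ennreal"
  by (rule infsum_mono) (auto intro: nonneg_summable_on_complete)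

lemma pot_meas:
  fixes \<kappa> :: "'a::t2_space \<Rightarrow> 'a \<Rightarrow> ennreal"
  assumes lsc: "\<forall>t. open {p :: 'a \<times> 'a. t < \<kappa> (fst p) (snd p)}"
    and "sets \<nu> = sets borel" "open_ireg \<nu>" "sets M = sets borel"
  shows "(\<lambda>x. \<integral>\<^sup>+y. \<kappa> x y \<partial>\<nu>) \<in> borel_measurable M"
  using pot_measurable[OF lsc assms(2,3)] assms(4) measurable_cong_sets by blast

lemma en_le_scale:
  fixes \<kappa> :: "'a::t2_space \<Rightarrow> 'a \<Rightarrow> ennreal"
  assumes lsc: "\<forall>t. open {p :: 'a \<times> 'a. t < \<kappa> (fst p) (snd p)}"
    and s: "sets \<mu>1 = sets borel" "sets \<mu> = sets borel" "sets \<nu>1 = sets borel" "sets \<nu> = sets borel"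
    and ir: "open_ireg \<nu>"
    and le1: "\<And>B. B \<in> sets borel \<Longrightarrow> emeasure \<mu>1 B \<le> c1 * emeasure \<mu> B"
    and le2: "\<And>B. B \<in> sets borel \<Longrightarrow> emeasure \<nu>1 B \<le> c2 * emeasure \<nu> B"
  shows "en \<kappa> \<mu>1 \<nu>1 \<le> c1 * (c2 * en \<kappa> \<mu> \<nu>)"
proof -
  have "en \<kappa> \<mu>1 \<nu>1 \<le> (\<integral>\<^sup>+ x. c2 * (\<integral>\<^sup>+ y. \<kappa> x y \<partial>\<nu>) \<partial>\<mu>1)"
    unfolding en_def
    by (intro nn_integral_mono nn_integral_le_cmeasure) (use s le2 in auto)
  also have "\<dots> \<le> c1 * (\<integral>\<^sup>+ x. c2 * (\<integral>\<^sup>+ y. \<kappa> x y \<partial>\<nu>) \<partial>\<mu>)"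
    by (rule nn_integral_le_cmeasure) (use s le1 in auto)
  also have "\<dots> = c1 * (c2 * en \<kappa> \<mu> \<nu>)"
    unfolding en_def by (subst nn_integral_cmult) (use pot_meas[OF lsc s(4) ir s(2)] in auto)
  finally show ?thesis .
qed

lemma en_mono:
  fixes \<kappa> :: "'a::t2_space \<Rightarrow> 'a \<Rightarrow> ennreal"
  assumes s: "sets \<mu>1 = sets borel" "sets \<mu> = sets borel" "sets \<nu>1 = sets borel" "sets \<nu> = sets borel"
    and le1: "\<And>B. B \<in> sets borel \<Longrightarrow> emeasure \<mu>1 B \<le> emeasure \<mu> B"
    and le2: "\<And>B. B \<in> sets borel \<Longrightarrow> emeasure \<nu>1 B \<le> emeasure \<nu> B"
  shows "en \<kappa> \<mu>1 \<nu>1 \<le> en \<kappa> \<mu> \<nu>"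
proof -
  have "en \<kappa> \<mu>1 \<nu>1 \<le> (\<integral>\<^sup>+ x. (\<integral>\<^sup>+ y. \<kappa> x y \<partial>\<nu>) \<partial>\<mu>1)"
    unfolding en_def
    by (intro nn_integral_mono nn_integral_le_measure) (use s le2 in auto)
  also have "\<dots> \<le> en \<kappa> \<mu> \<nu>"
    unfolding en_def by (rule nn_integral_le_measure) (use s le1 in auto)
  finally show ?thesis .
qed

lemma en_SUP_inner:
  fixes \<kappa> :: "'a::t2_space \<Rightarrow> 'a \<Rightarrow> ennreal"
  assumes lsc: "\<forall>t. open {p :: 'a \<times> 'a. t < \<kappa> (fst p) (snd p)}"
    and sP: "sets P = sets borel" and sN: "sets N = sets borel"
    and sM: "\<And>n. sets (M n) = sets borel" and ir: "\<And>n. open_ireg (M n)"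
    and inc: "\<And>B. B \<in> sets borel \<Longrightarrow> incseq (\<lambda>n. emeasure (M n) B)"
    and sup: "\<And>B. B \<in> sets borel \<Longrightarrow> (SUP n. emeasure (M n) B) = emeasure N B"
  shows "(SUP n. en \<kappa> P (M n)) = en \<kappa> P N"
proof -
  have incf: "incseq (\<lambda>n x. \<integral>\<^sup>+ y. \<kappa> x y \<partial>M n)"
  proof (rule incseq_SucI, rule le_funI)
    fix n x show "(\<integral>\<^sup>+ y. \<kappa> x y \<partial>M n) \<le> (\<integral>\<^sup>+ y. \<kappa> x y \<partial>M (Suc n))"
      by (rule nn_integral_le_measure) (use sM inc in \<open>auto simp: incseq_Suc_iff\<close>)
  qed
  have "(SUP n. en \<kappa> P (M n)) = (\<integral>\<^sup>+ x. (SUP n. \<integral>\<^sup>+ y. \<kappa> x y \<partial>M n) \<partial>P)"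
    unfolding en_def
    by (rule nn_integral_monotone_convergence_SUP[symmetric, OF incf]) (rule pot_meas[OF lsc sM ir sP])
  also have "\<dots> = en \<kappa> P N"
    unfolding en_def
    by (intro nn_integral_cong nn_integral_SUP_measure) (use sM sN inc sup in auto)
  finally show ?thesis .
qed

lemma en_SUP_outer:
  fixes \<kappa> :: "'a::t2_space \<Rightarrow> 'a \<Rightarrow> ennreal"
  assumes sN: "sets N = sets borel"
    and sM: "\<And>n. sets (M n) = sets borel"
    and inc: "\<And>B. B \<in> sets borel \<Longrightarrow> incseq (\<lambda>n. emeasure (M n) B)"
    and sup: "\<And>B. B \<in> sets borel \<Longrightarrow> (SUP n. emeasure (M n) B) = emeasure N B"
  shows "(SUP n. en \<kappa> (M n) P) = en \<kappa> N P"
  unfolding en_def by (rule nn_integral_SUP_measure) (use sM sN inc sup in auto)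



lemma ennreal_zero_if_small:
  fixes x :: ennreal
  assumes "\<And>n. x \<le> ennreal (1 / Suc n)"
  shows "x = 0"
proof -
  have "x \<le> 0 + ennreal e" if e: "0 < e" for e :: real
  proof -
    obtain n :: nat where n: "1 / e < real n" using reals_Archimedean2 by blast
    have "1 / real (Suc n) \<le> e"
      using e n by (simp add: divide_le_eq field_simps)
    then have "ennreal (1 / Suc n) \<le> ennreal e" by (rule ennreal_leI)
    then show ?thesis using assms[of n] by simp
  qed
  then have "x \<le> 0" by (rule ennreal_le_epsilon) auto
  then show ?thesis by simp
qed

lemma exhaust:
  fixes \<mu> :: "'a::t2_space measure"
  assumes rad: "radon \<mu>" and fin: "emeasure \<mu> UNIV < \<infinity>" and cl: "closed A"
    and null: "emeasure \<mu> (- A) = 0"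
  shows "\<exists>K. (\<forall>n. compact (K n) \<and> K n \<subseteq> A) \<and> incseq K \<and>
             (\<forall>B\<in>sets borel. emeasure \<mu> B = (SUP n. emeasure \<mu> (K n \<inter> B)))"
proof -
  have sets: "sets \<mu> = sets borel" using rad by (simp add: radon_def)
  have sup: "emeasure \<mu> UNIV = (SUP K\<in>{K. compact K \<and> K \<subseteq> UNIV}. emeasure \<mu> K)"
    using rad unfolding radon_def by (metis open_UNIV)
  have "\<exists>C. compact C \<and> emeasure \<mu> UNIV < emeasure \<mu> C + ennreal (1 / Suc n)" for n
  proof -
    have ne: "{K. compact K \<and> K \<subseteq> (UNIV::'a set)} \<noteq> {}" by (metis (mono_tags) compact_empty empty_iff mem_Collect_eq subset_UNIV)
    from SUP_approx_ennreal[OF _ ne sup, of "1 / Suc n"] fin show ?thesis by auto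
  qed
  then obtain C where C: "\<And>n. compact (C n)" "\<And>n. emeasure \<mu> UNIV < emeasure \<mu> (C n) + ennreal (1 / Suc n)"
    by metis
  have Cm: "\<And>n. C n \<in> sets \<mu>" using C sets compact_sets_borel by auto
  have Ccm: "\<And>n. - C n \<in> sets \<mu>" using C(1) sets by (auto simp: borel_open open_Compl compact_imp_closed)
  have smallC: "emeasure \<mu> (- C n) \<le> ennreal (1 / Suc n)" for n
  proof -
    have "emeasure \<mu> (C n) + emeasure \<mu> (- C n) = emeasure \<mu> (C n \<union> - C n)"
      by (rule plus_emeasure) (use Cm Ccm in auto)
    also have "\<dots> = emeasure \<mu> UNIV" by simp
    finally have "emeasure \<mu> (C n) + emeasure \<mu> (- C n) < emeasure \<mu> (C n) + ennreal (1 / Suc n)"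
      using C(2)[of n] by simp
    then show ?thesis by (simp add: ennreal_add_left_cancel_less less_imp_le)
  qed
  define K where "K n = A \<inter> (\<Union>i\<le>n. C i)" for n
  have Kc: "compact (K n) \<and> K n \<subseteq> A" for n
    unfolding K_def using C(1) cl by (auto intro!: closed_Int_compact compact_UN)
  have Kinc: "incseq K" unfolding K_def incseq_def by (auto intro: order_trans)
  have Km: "\<And>n. K n \<in> sets borel" using Kc compact_sets_borel by auto
  have "emeasure \<mu> B = (SUP n. emeasure \<mu> (K n \<inter> B))" if B: "B \<in> sets borel" for B
  proof -
    have "(SUP n. emeasure \<mu> (K n \<inter> B)) = emeasure \<mu> (\<Union>n. K n \<inter> B)"
    proof (rule SUP_emeasure_incseq)
      show "range (\<lambda>n. K n \<inter> B) \<subseteq> sets \<mu>" using Km B sets by auto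
      show "incseq (\<lambda>n. K n \<inter> B)" using Kinc unfolding incseq_def by (meson Int_mono order_refl)
    qed
    moreover have "emeasure \<mu> B = emeasure \<mu> (\<Union>n. K n \<inter> B)"
    proof (rule antisym)
      have UKm: "(\<Union>n. K n \<inter> B) \<in> sets \<mu>" using Km B sets by auto
      have Dm: "B - (\<Union>n. K n \<inter> B) \<in> sets \<mu>" using UKm B sets by auto
      have "emeasure \<mu> (B - (\<Union>n. K n \<inter> B)) = 0"
      proof (rule ennreal_zero_if_small)
        fix n
        have "B - (\<Union>n. K n \<inter> B) \<subseteq> - A \<union> - C n" unfolding K_def by auto
        then have "emeasure \<mu> (B - (\<Union>n. K n \<inter> B)) \<le> emeasure \<mu> (- A \<union> - C n)"
          using cl Ccm sets by (intro emeasure_mono) (auto simp: borel_open)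
        also have "\<dots> \<le> emeasure \<mu> (- A) + emeasure \<mu> (- C n)"
          using cl Ccm sets by (intro emeasure_subadditive) (auto simp: borel_open)
        also have "\<dots> \<le> ennreal (1 / Suc n)" using null smallC[of n] by simp
        finally show "emeasure \<mu> (B - (\<Union>n. K n \<inter> B)) \<le> ennreal (1 / Suc n)" .
      qed
      moreover have "emeasure \<mu> B \<le> emeasure \<mu> (\<Union>n. K n \<inter> B) + emeasure \<mu> (B - (\<Union>n. K n \<inter> B))"
      proof -
        have "emeasure \<mu> B = emeasure \<mu> ((\<Union>n. K n \<inter> B) \<union> (B - (\<Union>n. K n \<inter> B)))"
          by (intro arg_cong[where f="emeasure \<mu>"]) auto
        also have "\<dots> \<le> emeasure \<mu> (\<Union>n. K n \<inter> B) + emeasure \<mu> (B - (\<Union>n. K n \<inter> B))"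
          using UKm Dm by (rule emeasure_subadditive)
        finally show ?thesis .
      qed
      ultimately show "emeasure \<mu> B \<le> emeasure \<mu> (\<Union>n. K n \<inter> B)" by simp
      show "emeasure \<mu> (\<Union>n. K n \<inter> B) \<le> emeasure \<mu> B"
        using B sets by (intro emeasure_mono) auto
    qed
    ultimately show ?thesis by simp
  qed
  then show ?thesis using Kc Kinc by blast
qed



lemma rs_le:
  fixes \<mu> :: "'a::t2_space measure"
  assumes "sets \<mu> = sets borel" "K \<in> sets borel" "B \<in> sets borel" "1 \<le> c"
  shows "emeasure (rs \<mu> c K) B \<le> ennreal c * emeasure \<mu> B"
  using assms by (simp add: rs_emeasure mult_left_mono emeasure_mono)

lemma concentrated_rs:
  fixes \<mu> :: "'a::t2_space measure"
  assumes "sets \<mu> = sets borel" "compact K"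
  shows "concentrated (rs \<mu> c K) K"
  unfolding concentrated_def
proof (intro bexI[of _ "- K"] conjI)
  show "- K \<in> sets borel" using assms by (simp add: borel_open open_Compl compact_imp_closed)
  then show "emeasure (rs \<mu> c K) (- K) = 0"
    using assms by (subst rs_emeasure) (auto simp: compact_sets_borel)
qed simp

lemma admissible_restrict:
  fixes \<kappa> :: "'a::t2_space \<Rightarrow> 'a \<Rightarrow> ennreal"
  assumes lsc: "\<forall>t. open {p :: 'a \<times> 'a. t < \<kappa> (fst p) (snd p)}"
    and adm: "\<mu> \<in> admissible \<kappa> Ip In A a g"
    and l: "l \<in> Ip \<union> In" and K: "compact K" "K \<subseteq> A l"
    and c: "1 \<le> c"
    and gm: "(\<lambda>x. ennreal (g x) * indicator K x) \<in> borel_measurable borel"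
    and norm: "ennreal c * (\<integral>\<^sup>+x. ennreal (g x) * indicator K x \<partial>\<mu> l) = ennreal (a l)"
  shows "\<mu>(l := rs (\<mu> l) c K) \<in> admissible \<kappa> Ip In (A(l := K)) a g"
proof -
  let ?\<mu> = "\<mu>(l := rs (\<mu> l) c K)"
  have rad: "\<And>i. i \<in> Ip \<union> In \<Longrightarrow> radon (\<mu> i)" and
    conc: "\<And>i. i \<in> Ip \<union> In \<Longrightarrow> concentrated (\<mu> i) (A i)" and
    int: "\<And>i. i \<in> Ip \<union> In \<Longrightarrow> (\<integral>\<^sup>+ x. ennreal (g x) * indicator (A i) x \<partial>\<mu> i) = ennreal (a i)" and
    fve: "finite_vec_energy \<kappa> Ip In \<mu>"
    using adm unfolding admissible_def by auto
  have sets: "\<And>i. i \<in> Ip \<union> In \<Longrightarrow> sets (\<mu> i) = sets borel" using rad by (simp add: radon_def)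
  have Km: "K \<in> sets borel" using K compact_sets_borel by auto
  have sets': "\<And>i. i \<in> Ip \<union> In \<Longrightarrow> sets (?\<mu> i) = sets borel" using sets l by auto
  have le: "\<And>i (B::'a set). i \<in> Ip \<union> In \<Longrightarrow> B \<in> sets borel \<Longrightarrow> emeasure (?\<mu> i) B \<le> ennreal c * emeasure (\<mu> i) B"
  proof -
    fix i and B :: "'a set" assume i: "i \<in> Ip \<union> In" and B: "B \<in> sets borel"
    show "emeasure (?\<mu> i) B \<le> ennreal c * emeasure (\<mu> i) B"
    proof (cases "i = l")
      case True then show ?thesis using rs_le[OF sets[OF l] Km B c] by simp
    next
      case False
      have "emeasure (\<mu> i) B \<le> ennreal 1 * emeasure (\<mu> i) B" by simp
      also have "\<dots> \<le> ennreal c * emeasure (\<mu> i) B" using c by (intro mult_right_mono ennreal_leI) auto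
      finally show ?thesis using False by simp
    qed
  qed
  have enle: "\<And>i j. i \<in> Ip \<union> In \<Longrightarrow> j \<in> Ip \<union> In \<Longrightarrow>
      en \<kappa> (?\<mu> i) (?\<mu> j) \<le> ennreal c * (ennreal c * en \<kappa> (\<mu> i) (\<mu> j))"
  proof -
    fix i j assume i: "i \<in> Ip \<union> In" and j: "j \<in> Ip \<union> In"
    show "en \<kappa> (?\<mu> i) (?\<mu> j) \<le> ennreal c * (ennreal c * en \<kappa> (\<mu> i) (\<mu> j))"
      by (rule en_le_scale[OF lsc sets'[OF i] sets[OF i] sets'[OF j] sets[OF j]
            radon_open_ireg[OF rad[OF j]] le[OF i] le[OF j]])
  qed
  have fin: "(\<Sum>\<^sub>\<infinity> p\<in>S. en \<kappa> (?\<mu> (fst p)) (?\<mu> (snd p))) < \<infinity>"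
    if S: "S \<subseteq> (Ip \<union> In) \<times> (Ip \<union> In)" and f: "(\<Sum>\<^sub>\<infinity> p\<in>S. en \<kappa> (\<mu> (fst p)) (\<mu> (snd p))) < \<infinity>" for S
  proof -
    have "(\<Sum>\<^sub>\<infinity> p\<in>S. en \<kappa> (?\<mu> (fst p)) (?\<mu> (snd p))) \<le>
        (\<Sum>\<^sub>\<infinity> p\<in>S. ennreal c * (ennreal c * en \<kappa> (\<mu> (fst p)) (\<mu> (snd p))))"
    proof (rule infsum_mono_ennreal)
      fix p assume "p \<in> S"
      then have "fst p \<in> Ip \<union> In" "snd p \<in> Ip \<union> In" using S by auto
      then show "en \<kappa> (?\<mu> (fst p)) (?\<mu> (snd p)) \<le> ennreal c * (ennreal c * en \<kappa> (\<mu> (fst p)) (\<mu> (snd p)))"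
        by (rule enle)
    qed
    also have "\<dots> = ennreal c * (ennreal c * (\<Sum>\<^sub>\<infinity> p\<in>S. en \<kappa> (\<mu> (fst p)) (\<mu> (snd p))))"
      by (simp add: infsum_cmult_ennreal)
    also have "\<dots> < \<infinity>" using f by (simp add: ennreal_mult_less_top)
    finally show ?thesis .
  qed
  have fve': "finite_vec_energy \<kappa> Ip In ?\<mu>"
    using fve unfolding finite_vec_energy_def by (intro conjI fin) auto
  show ?thesis
    unfolding admissible_def
  proof (intro CollectI conjI ballI fve')
    fix i assume i: "i \<in> Ip \<union> In"
    show "radon (?\<mu> i)"
      using rad[OF i] radon_rs[OF rad[OF l] K(1), of c] c by auto
    show "concentrated (?\<mu> i) ((A(l := K)) i)"
      using conc[OF i] concentrated_rs[OF sets[OF l] K(1)] by auto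
    show "(\<integral>\<^sup>+ x. ennreal (g x) * indicator ((A(l := K)) i) x \<partial>?\<mu> i) = ennreal (a i)"
    proof (cases "i = l")
      case False then show ?thesis using int[OF i] by simp
    next
      case True
      have gm': "(\<lambda>x. ennreal (g x) * indicator K x) \<in> borel_measurable (\<mu> l)"
        using gm sets[OF l] measurable_cong_sets by blast
      have "(\<integral>\<^sup>+ x. ennreal (g x) * indicator K x \<partial>rs (\<mu> l) c K) =
          (\<integral>\<^sup>+ x. (ennreal c * indicator K x) * (ennreal (g x) * indicator K x) \<partial>\<mu> l)"
        unfolding rs_def by (rule nn_integral_density) (use gm' Km sets[OF l] in auto)
      also have "\<dots> = (\<integral>\<^sup>+ x. ennreal c * (ennreal (g x) * indicator K x) \<partial>\<mu> l)"
        by (intro nn_integral_cong) (simp add: indicator_def)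
      also have "\<dots> = ennreal (a l)"
        using norm by (subst nn_integral_cmult) (use gm' in auto)
      finally show ?thesis using True by simp
    qed
  qed
qed



definition GG :: "ennreal \<Rightarrow> ennreal \<Rightarrow> ennreal \<Rightarrow> ennreal \<Rightarrow> ennreal \<Rightarrow> ennreal \<Rightarrow> ennreal \<Rightarrow> ennreal \<Rightarrow> ereal" where
  "GG p n b1 b2 c1 c2 d1 d2 = ((enn2ereal p + enn2ereal n) - (enn2ereal b1 + enn2ereal b2)) +
      2 * ((enn2ereal c1 + enn2ereal c2) - (enn2ereal d1 + enn2ereal d2))"

lemma Gchi_GG: "Gchi \<kappa> chi Ip In \<mu> = GG (en \<kappa> (summeas \<mu> Ip) (summeas \<mu> Ip)) (en \<kappa> (summeas \<mu> In) (summeas \<mu> In))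
   (en \<kappa> (summeas \<mu> Ip) (summeas \<mu> In)) (en \<kappa> (summeas \<mu> In) (summeas \<mu> Ip))
   (en \<kappa> (fst chi) (summeas \<mu> Ip)) (en \<kappa> (snd chi) (summeas \<mu> In))
   (en \<kappa> (fst chi) (summeas \<mu> In)) (en \<kappa> (snd chi) (summeas \<mu> Ip))"
  unfolding Gchi_def senergy_def Rmeas_def GG_def by simp

lemma enn2ereal_mono: "x \<le> y \<Longrightarrow> enn2ereal x \<le> enn2ereal y"
  by (simp add: less_eq_ennreal.rep_eq)

lemma GG_mono:
  assumes "n \<le> n'" "b1' \<le> b1" "b2' \<le> b2" "c2 \<le> c2'" "d1' \<le> d1"
  shows "GG p n b1 b2 c1 c2 d1 d2 \<le> GG p n' b1' b2' c1 c2' d1' d2"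
proof -
  have 1: "enn2ereal p + enn2ereal n \<le> enn2ereal p + enn2ereal n'" using assms by (intro add_mono enn2ereal_mono) auto
  have 2: "enn2ereal b1' + enn2ereal b2' \<le> enn2ereal b1 + enn2ereal b2" using assms by (intro add_mono enn2ereal_mono) auto
  have 3: "enn2ereal c1 + enn2ereal c2 \<le> enn2ereal c1 + enn2ereal c2'" using assms by (intro add_mono enn2ereal_mono) auto
  have 4: "enn2ereal d1' + enn2ereal d2 \<le> enn2ereal d1 + enn2ereal d2" using assms by (intro add_mono enn2ereal_mono) auto
  have a: "(enn2ereal p + enn2ereal n) - (enn2ereal b1 + enn2ereal b2) \<le> (enn2ereal p + enn2ereal n') - (enn2ereal b1' + enn2ereal b2')"
    using 1 2 by (rule ereal_minus_mono)
  have b: "(enn2ereal c1 + enn2ereal c2) - (enn2ereal d1 + enn2ereal d2) \<le> (enn2ereal c1 + enn2ereal c2') - (enn2ereal d1' + enn2ereal d2)"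
    using 3 4 by (rule ereal_minus_mono)
  have b2: "2 * ((enn2ereal c1 + enn2ereal c2) - (enn2ereal d1 + enn2ereal d2)) \<le> 2 * ((enn2ereal c1 + enn2ereal c2') - (enn2ereal d1' + enn2ereal d2))"
    using b by (rule ereal_mult_left_mono) simp
  show ?thesis unfolding GG_def using a b2 by (rule add_mono)
qed

lemma enn2ereal_add_ne_minf: "enn2ereal a + enn2ereal b \<noteq> - \<infinity>"
proof -
  have "0 \<le> enn2ereal a + enn2ereal b" by (intro add_nonneg_nonneg enn2ereal_nonneg)
  then show ?thesis by auto
qed

lemma GG_tendsto:
  assumes fin: "GG p n b1 b2 c1 c2 d1 d2 \<noteq> \<infinity>"
    and t: "fn \<longlonglongrightarrow> n" "fb1 \<longlonglongrightarrow> b1" "fb2 \<longlonglongrightarrow> b2" "fc2 \<longlonglongrightarrow> c2" "fd1 \<longlonglongrightarrow> d1"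
  shows "(\<lambda>k. GG p (fn k) (fb1 k) (fb2 k) c1 (fc2 k) (fd1 k) d2) \<longlonglongrightarrow> GG p n b1 b2 c1 c2 d1 d2"
proof -
  define X where "X = enn2ereal p + enn2ereal n"
  define Y where "Y = enn2ereal b1 + enn2ereal b2"
  define Xc where "Xc = enn2ereal c1 + enn2ereal c2"
  define Yc where "Yc = enn2ereal d1 + enn2ereal d2"
  have G: "GG p n b1 b2 c1 c2 d1 d2 = (X - Y) + 2 * (Xc - Yc)"
    unfolding GG_def X_def Y_def Xc_def Yc_def ..
  have X: "X \<noteq> \<infinity>"
  proof
    assume "X = \<infinity>" then have "GG p n b1 b2 c1 c2 d1 d2 = \<infinity>" unfolding G by simp
    with fin show False by simp
  qed
  have Xc: "Xc \<noteq> \<infinity>"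
  proof
    assume "Xc = \<infinity>" then have "GG p n b1 b2 c1 c2 d1 d2 = \<infinity>" unfolding G
      by (cases "X - Y") auto
    with fin show False by simp
  qed
  have Xm: "X \<noteq> - \<infinity>" "Xc \<noteq> - \<infinity>" "Y \<noteq> - \<infinity>" "Yc \<noteq> - \<infinity>"
    unfolding X_def Xc_def Y_def Yc_def by (rule enn2ereal_add_ne_minf)+
  have tX: "(\<lambda>k. enn2ereal p + enn2ereal (fn k)) \<longlonglongrightarrow> X"
    unfolding X_def by (intro tendsto_add_ereal_general) (use t in auto)
  have tY: "(\<lambda>k. enn2ereal (fb1 k) + enn2ereal (fb2 k)) \<longlonglongrightarrow> Y"
    unfolding Y_def by (intro tendsto_add_ereal_general) (use t in auto)
  have tXc: "(\<lambda>k. enn2ereal c1 + enn2ereal (fc2 k)) \<longlonglongrightarrow> Xc"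
    unfolding Xc_def by (intro tendsto_add_ereal_general) (use t in auto)
  have tYc: "(\<lambda>k. enn2ereal (fd1 k) + enn2ereal d2) \<longlonglongrightarrow> Yc"
    unfolding Yc_def by (intro tendsto_add_ereal_general) (use t in auto)
  have t1: "(\<lambda>k. (enn2ereal p + enn2ereal (fn k)) - (enn2ereal (fb1 k) + enn2ereal (fb2 k))) \<longlonglongrightarrow> X - Y"
    by (rule tendsto_diff_ereal_general[OF tX tY]) (use X Xm in auto)
  have t2: "(\<lambda>k. (enn2ereal c1 + enn2ereal (fc2 k)) - (enn2ereal (fd1 k) + enn2ereal d2)) \<longlonglongrightarrow> Xc - Yc"
    by (rule tendsto_diff_ereal_general[OF tXc tYc]) (use Xc Xm in auto)
  have t2': "(\<lambda>k. 2 * ((enn2ereal c1 + enn2ereal (fc2 k)) - (enn2ereal (fd1 k) + enn2ereal d2))) \<longlonglongrightarrow> 2 * (Xc - Yc)"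
    by (rule tendsto_cmult_ereal[OF _ t2]) simp
  have ne1: "X - Y \<noteq> \<infinity>" using X Xm by (cases X; cases Y) auto
  have ne2: "2 * (Xc - Yc) \<noteq> \<infinity>" using Xc Xm by (cases Xc; cases Yc) auto
  show ?thesis
    unfolding G unfolding GG_def
    by (rule tendsto_add_ereal_general[OF _ t1 t2']) (use ne1 ne2 in auto)
qed



lemma summeas_cong: "(\<And>i. i \<in> J \<Longrightarrow> \<mu> i = \<nu> i) \<Longrightarrow> summeas \<mu> J = summeas \<nu> J"
  unfolding summeas_def
  by (intro arg_cong[where f = "measure_of UNIV (sets borel)"] ext suminf_cong) auto

lemma suminf_le_cmult_ennreal:
  fixes f h :: "nat \<Rightarrow> ennreal"
  shows "(\<And>i. f i \<le> c * h i) \<Longrightarrow> (\<Sum>i. f i) \<le> c * (\<Sum>i. h i)"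
  by (metis ennreal_suminf_cmult suminf_le summableI)

lemma gmeas:
  fixes g :: "'a::topological_space \<Rightarrow> real"
  assumes "continuous_on S g" "K \<subseteq> S" "K \<in> sets borel"
  shows "(\<lambda>x. ennreal (g x) * indicator K x) \<in> borel_measurable borel"
proof -
  have "(\<lambda>x. indicator K x *\<^sub>R g x) \<in> borel_measurable borel"
    using assms by (intro borel_measurable_continuous_on_indicator) (auto intro: continuous_on_subset)
  then have "(\<lambda>x. ennreal (indicator K x *\<^sub>R g x)) \<in> borel_measurable borel" by measurable
  moreover have "(\<lambda>x. ennreal (indicator K x *\<^sub>R g x)) = (\<lambda>x. ennreal (g x) * indicator K x)"
    by (auto simp: indicator_def)
  ultimately show ?thesis by simp
qed



lemma upper:
  fixes \<kappa> :: "'a::t2_space \<Rightarrow> 'a \<Rightarrow> ennreal"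
  assumes lsc: "\<forall>t. open {p :: 'a \<times> 'a. t < \<kappa> (fst p) (snd p)}"
    and cond: "condenser \<kappa> Ip In A"
    and chi1: "energy_space \<kappa> chi"
    and weight: "weight_ok \<kappa> (Ip \<union> In) A g"
    and a_pos: "\<forall>i\<in>Ip \<union> In. a i > 0"
    and ell: "l \<in> In"
    and adm: "\<mu> \<in> admissible \<kappa> Ip In A a g"
    and less: "Gchi \<kappa> chi Ip In \<mu> < y"
  shows "\<exists>K0. compact K0 \<and> K0 \<subseteq> A l \<and>
     (\<forall>K. compact K \<and> K0 \<subseteq> K \<and> K \<subseteq> A l \<longrightarrow> Ginf \<kappa> chi Ip In (A(l := K)) a g < y)"
proof -
  have lI: "l \<in> Ip \<union> In" using ell by simp
  have lIp: "l \<notin> Ip" using cond ell unfolding condenser_def by auto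
  have rad: "\<And>i. i \<in> Ip \<union> In \<Longrightarrow> radon (\<mu> i)" and
    conc: "\<And>i. i \<in> Ip \<union> In \<Longrightarrow> concentrated (\<mu> i) (A i)" and
    int: "\<And>i. i \<in> Ip \<union> In \<Longrightarrow> (\<integral>\<^sup>+ x. ennreal (g x) * indicator (A i) x \<partial>\<mu> i) = ennreal (a i)"
    using adm unfolding admissible_def by auto
  have sets: "\<And>i. i \<in> Ip \<union> In \<Longrightarrow> sets (\<mu> i) = sets borel" using rad by (simp add: radon_def)
  have clA: "closed (A l)" using cond lI unfolding condenser_def by auto
  have Alm: "A l \<in> sets borel" using clA by (simp add: borel_closed)
  have radchi: "radon (fst chi)" "radon (snd chi)"
    using chi1 unfolding energy_space_def signed_radon_def by auto
  have schi: "sets (fst chi) = sets borel" "sets (snd chi) = sets borel"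
    using radchi by (auto simp: radon_def)
  have gcont: "continuous_on (\<Union>i\<in>Ip \<union> In. A i) g" using weight by (simp add: weight_ok_def)
  obtain c0 where c0: "c0 > 0" "\<And>x. x \<in> (\<Union>i\<in>Ip \<union> In. A i) \<Longrightarrow> c0 \<le> g x"
    using weight unfolding weight_ok_def by blast
  have AlU: "A l \<subseteq> (\<Union>i\<in>Ip \<union> In. A i)" using lI by auto
  have al: "a l > 0" using a_pos lI by auto
  define \<mu>l where "\<mu>l = \<mu> l"
  have radl: "radon \<mu>l" and setsl: "sets \<mu>l = sets borel" using rad[OF lI] sets[OF lI] by (auto simp: \<mu>l_def)
  have gmK: "(\<lambda>x. ennreal (g x) * indicator K x) \<in> borel_measurable borel" if "K \<subseteq> A l" "K \<in> sets borel" for K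
    using gmeas[OF gcont] that AlU by blast
  have null: "emeasure \<mu>l (- A l) = 0"
  proof -
    obtain B where B: "B \<in> sets borel" "- A l \<subseteq> B" "emeasure \<mu>l B = 0"
      using conc[OF lI] unfolding concentrated_def \<mu>l_def by blast
    have "emeasure \<mu>l (- A l) \<le> emeasure \<mu>l B" using B setsl by (intro emeasure_mono) auto
    then show ?thesis using B by simp
  qed
  have intl: "(\<integral>\<^sup>+ x. ennreal (g x) * indicator (A l) x \<partial>\<mu>l) = ennreal (a l)"
    using int[OF lI] by (simp add: \<mu>l_def)
  have finl: "emeasure \<mu>l UNIV < \<infinity>"
  proof -
    have "ennreal c0 * emeasure \<mu>l (A l) = (\<integral>\<^sup>+ x. ennreal c0 * indicator (A l) x \<partial>\<mu>l)"
      using Alm setsl by (simp add: nn_integral_cmult_indicator)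
    also have "\<dots> \<le> (\<integral>\<^sup>+ x. ennreal (g x) * indicator (A l) x \<partial>\<mu>l)"
    proof (intro nn_integral_mono)
      fix x
      have "x \<in> A l \<Longrightarrow> c0 \<le> g x" using c0(2) AlU by blast
      then show "ennreal c0 * indicator (A l) x \<le> ennreal (g x) * indicator (A l) x"
        by (auto simp: indicator_def intro: ennreal_leI)
    qed
    also have "\<dots> < \<infinity>" using intl by simp
    finally have "emeasure \<mu>l (A l) < \<infinity>" using c0 by (auto simp: ennreal_mult_less_top)
    moreover have "emeasure \<mu>l UNIV \<le> emeasure \<mu>l (A l) + emeasure \<mu>l (- A l)"
    proof -
      have "emeasure \<mu>l UNIV = emeasure \<mu>l (A l \<union> - A l)" by simp
      also have "\<dots> \<le> emeasure \<mu>l (A l) + emeasure \<mu>l (- A l)"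
        using Alm setsl clA by (intro emeasure_subadditive) (auto simp: borel_open)
      finally show ?thesis .
    qed
    ultimately show ?thesis using null by simp
  qed
  obtain Kq where Kq: "\<And>n. compact (Kq n)" "\<And>n. Kq n \<subseteq> A l" "incseq Kq"
    "\<And>B. B \<in> sets borel \<Longrightarrow> emeasure \<mu>l B = (SUP n. emeasure \<mu>l (Kq n \<inter> B))"
    using exhaust[OF radl finl clA null] by blast
  have Kqm: "\<And>n. Kq n \<in> sets borel" using Kq(1) compact_sets_borel by auto
  define M where "M n = rs \<mu>l 1 (Kq n)" for n
  have M_em: "emeasure (M n) B = emeasure \<mu>l (Kq n \<inter> B)" if "B \<in> sets borel" for n B
    unfolding M_def using that Kqm setsl by (simp add: rs_emeasure)
  have M_sets: "\<And>n. sets (M n) = sets borel" using setsl by (simp add: M_def)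
  have M_inc: "incseq (\<lambda>n. emeasure (M n) B)" if "B \<in> sets borel" for B
    unfolding incseq_def
  proof (intro allI impI)
    fix m n :: nat assume "m \<le> n"
    then have "Kq m \<subseteq> Kq n" using Kq(3) by (simp add: incseq_def)
    then show "emeasure (M m) B \<le> emeasure (M n) B"
      unfolding M_em[OF that] using that Kqm setsl by (intro emeasure_mono) auto
  qed
  have M_sup: "(SUP n. emeasure (M n) B) = emeasure \<mu>l B" if "B \<in> sets borel" for B
    using Kq(4)[OF that] M_em[OF that] by simp
  define \<rho> where "\<rho> K = (\<integral>\<^sup>+ x. ennreal (g x) * indicator K x \<partial>\<mu>l)" for K
  have \<rho>_mono: "\<rho> K \<le> \<rho> K'" if "K \<subseteq> K'" for K K'
    unfolding \<rho>_def by (intro nn_integral_mono) (use that in \<open>auto simp: indicator_def\<close>)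
  have \<rho>_le: "\<rho> K \<le> ennreal (a l)" if "K \<subseteq> A l" for K
    using \<rho>_mono[OF that] intl by (simp add: \<rho>_def)
  have \<rho>_M: "\<rho> (Kq n) = (\<integral>\<^sup>+ x. ennreal (g x) * indicator (A l) x \<partial>M n)" for n
  proof -
    have gm: "(\<lambda>x. ennreal (g x) * indicator (A l) x) \<in> borel_measurable \<mu>l"
      using gmK[OF order_refl Alm] setsl measurable_cong_sets by blast
    have "(\<integral>\<^sup>+ x. ennreal (g x) * indicator (A l) x \<partial>M n) =
        (\<integral>\<^sup>+ x. (ennreal 1 * indicator (Kq n) x) * (ennreal (g x) * indicator (A l) x) \<partial>\<mu>l)"
      unfolding M_def rs_def by (rule nn_integral_density) (use gm Kqm setsl in auto)
    also have "\<dots> = \<rho> (Kq n)"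
      unfolding \<rho>_def by (intro nn_integral_cong) (use Kq(2) in \<open>auto simp: indicator_def\<close>)
    finally show ?thesis by simp
  qed
  have \<rho>_sup: "(SUP n. \<rho> (Kq n)) = ennreal (a l)"
    unfolding \<rho>_M intl[symmetric]
    by (rule nn_integral_SUP_measure) (use M_sets setsl M_inc M_sup in auto)
  have \<rho>_inc: "incseq (\<lambda>n. \<rho> (Kq n))" using Kq(3) \<rho>_mono by (simp add: incseq_def)
  have \<rho>_lim: "(\<lambda>n. \<rho> (Kq n)) \<longlonglongrightarrow> ennreal (a l)"
    using LIMSEQ_SUP[OF \<rho>_inc] \<rho>_sup by simp
  define cq where "cq n = a l / enn2real (\<rho> (Kq n))" for n
  have cq_lim: "cq \<longlonglongrightarrow> 1"
  proof -
    have "(\<lambda>n. enn2real (\<rho> (Kq n))) \<longlonglongrightarrow> a l"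
      by (rule tendsto_enn2real[OF \<rho>_lim]) (use al in simp)
    then have "(\<lambda>n. a l / enn2real (\<rho> (Kq n))) \<longlonglongrightarrow> a l / a l"
      using al by (intro tendsto_divide tendsto_const) auto
    moreover have "cq = (\<lambda>n. a l / enn2real (\<rho> (Kq n)))" by (simp add: cq_def fun_eq_iff)
    ultimately show ?thesis using al by simp
  qed
  have cq_nn: "0 \<le> cq n" for n using al by (simp add: cq_def)
  define P where "P = summeas \<mu> Ip"
  define N where "N = summeas \<mu> In"
  define N' where "N' n = summeas (\<mu>(l := M n)) In" for n
  have radM: "\<And>n. radon (M n)" unfolding M_def by (rule radon_rs[OF radl Kq(1)]) simp
  have irP: "open_ireg P" unfolding P_def by (rule summeas_open_ireg) (use rad in auto)
  have irN: "open_ireg N" unfolding N_def by (rule summeas_open_ireg) (use rad in auto)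
  have irN': "open_ireg (N' n)" for n
    unfolding N'_def by (rule summeas_open_ireg) (use rad radM in auto)
  have N'_em: "emeasure (N' n) B = (\<Sum>i. if i \<in> In then (if i = l then emeasure \<mu>l (Kq n \<inter> B) else emeasure (\<mu> i) B) else 0)"
    if B: "B \<in> sets borel" for n B
  proof -
    have "emeasure (N' n) B = (\<Sum>i. if i \<in> In then emeasure ((\<mu>(l := M n)) i) B else 0)"
      unfolding N'_def by (rule summeas_emeasure) (use B sets M_sets in auto)
    also have "\<dots> = (\<Sum>i. if i \<in> In then (if i = l then emeasure \<mu>l (Kq n \<inter> B) else emeasure (\<mu> i) B) else 0)"
      by (intro suminf_cong) (use M_em[OF B] in auto)
    finally show ?thesis .
  qed
  have N_em: "emeasure N B = (\<Sum>i. if i \<in> In then emeasure (\<mu> i) B else 0)" if B: "B \<in> sets borel" for B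
    unfolding N_def by (subst summeas_emeasure) (use B sets in auto)
  have N'_inc: "incseq (\<lambda>n. emeasure (N' n) B)" if B: "B \<in> sets borel" for B
    unfolding incseq_def
  proof (intro allI impI)
    fix m n :: nat assume mn: "m \<le> n"
    show "emeasure (N' m) B \<le> emeasure (N' n) B"
      unfolding N'_em[OF B]
    proof (intro suminf_le allI summableI)
      fix i
      have "emeasure \<mu>l (Kq m \<inter> B) \<le> emeasure \<mu>l (Kq n \<inter> B)"
        using M_inc[OF B] mn M_em[OF B] by (simp add: incseq_def)
      then show "(if i \<in> In then (if i = l then emeasure \<mu>l (Kq m \<inter> B) else emeasure (\<mu> i) B) else 0) \<le>
          (if i \<in> In then (if i = l then emeasure \<mu>l (Kq n \<inter> B) else emeasure (\<mu> i) B) else 0)"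
        by auto
    qed
  qed
  have N'_sup: "(SUP n. emeasure (N' n) B) = emeasure N B" if B: "B \<in> sets borel" for B
  proof -
    have "(SUP n. emeasure (N' n) B) = (SUP n. \<Sum>i. if i \<in> In then (if i = l then emeasure \<mu>l (Kq n \<inter> B) else emeasure (\<mu> i) B) else 0)"
      using N'_em[OF B] by simp
    also have "\<dots> = (\<Sum>i. SUP n. if i \<in> In then (if i = l then emeasure \<mu>l (Kq n \<inter> B) else emeasure (\<mu> i) B) else 0)"
    proof (rule ennreal_suminf_SUP_eq[symmetric])
      fix i
      show "incseq (\<lambda>n. if i \<in> In then (if i = l then emeasure \<mu>l (Kq n \<inter> B) else emeasure (\<mu> i) B) else 0)"
        using M_inc[OF B] M_em[OF B] by (auto simp: incseq_def)
    qed
    also have "\<dots> = (\<Sum>i. if i \<in> In then emeasure (\<mu> i) B else 0)"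
    proof (intro suminf_cong)
      fix i
      show "(SUP n. if i \<in> In then (if i = l then emeasure \<mu>l (Kq n \<inter> B) else emeasure (\<mu> i) B) else 0) =
          (if i \<in> In then emeasure (\<mu> i) B else 0)"
        using Kq(4)[OF B] by (auto simp: \<mu>l_def)
    qed
    finally show ?thesis using N_em[OF B] by simp
  qed
  have sN': "\<And>n. sets (N' n) = sets borel" by (simp add: N'_def)
  define eP eN B1 B2 C1 C2 D1 D2 where
    "eP = en \<kappa> P P" "eN = en \<kappa> N N" "B1 = en \<kappa> P N" "B2 = en \<kappa> N P"
    "C1 = en \<kappa> (fst chi) P" "C2 = en \<kappa> (snd chi) N" "D1 = en \<kappa> (fst chi) N" "D2 = en \<kappa> (snd chi) P"
  have G: "Gchi \<kappa> chi Ip In \<mu> = GG eP eN B1 B2 C1 C2 D1 D2"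
    unfolding Gchi_GG P_def N_def eP_eN_B1_B2_C1_C2_D1_D2_def ..
  have Gfin: "GG eP eN B1 B2 C1 C2 D1 D2 \<noteq> \<infinity>" using less G by auto
  have eN_fin: "eN \<noteq> \<infinity>"
  proof
    assume "eN = \<infinity>" then have "GG eP eN B1 B2 C1 C2 D1 D2 = \<infinity>" by (simp add: GG_def)
    with Gfin show False by simp
  qed
  have C2_fin: "C2 \<noteq> \<infinity>"
  proof
    assume "C2 = \<infinity>" then have "GG eP eN B1 B2 C1 C2 D1 D2 = \<infinity>"
      unfolding GG_def
      by (cases "(enn2ereal eP + enn2ereal eN) - (enn2ereal B1 + enn2ereal B2)") auto
    with Gfin show False by simp
  qed
  define H where "H n = GG eP (ennreal (cq n) * (ennreal (cq n) * eN)) (en \<kappa> P (N' n)) (en \<kappa> (N' n) P)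
                C1 (ennreal (cq n) * C2) (en \<kappa> (fst chi) (N' n)) D2" for n
  have sP: "sets P = sets borel" and sN: "sets N = sets borel" by (simp_all add: P_def N_def)
  have lim_n: "(\<lambda>n. ennreal (cq n) * (ennreal (cq n) * eN)) \<longlonglongrightarrow> eN"
  proof -
    obtain r where r: "eN = ennreal r" "0 \<le> r" using eN_fin by (cases eN) auto
    have "(\<lambda>n. cq n * (cq n * r)) \<longlonglongrightarrow> 1 * (1 * r)"
      by (intro tendsto_mult cq_lim tendsto_const)
    then have "(\<lambda>n. ennreal (cq n * (cq n * r))) \<longlonglongrightarrow> ennreal r" by (intro tendsto_ennrealI) simp
    then show ?thesis using r cq_nn by (simp add: ennreal_mult)
  qed
  have lim_c2: "(\<lambda>n. ennreal (cq n) * C2) \<longlonglongrightarrow> C2"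
  proof -
    obtain r where r: "C2 = ennreal r" "0 \<le> r" using C2_fin by (cases C2) auto
    have "(\<lambda>n. cq n * r) \<longlonglongrightarrow> 1 * r"
      by (intro tendsto_mult cq_lim tendsto_const)
    then have "(\<lambda>n. ennreal (cq n * r)) \<longlonglongrightarrow> ennreal r" by (intro tendsto_ennrealI) simp
    then show ?thesis using r cq_nn by (simp add: ennreal_mult)
  qed
  have N'_le: "\<And>m n B. m \<le> n \<Longrightarrow> B \<in> sets borel \<Longrightarrow> emeasure (N' m) B \<le> emeasure (N' n) B"
    using N'_inc by (simp add: incseq_def)
  have lim_b1: "(\<lambda>n. en \<kappa> P (N' n)) \<longlonglongrightarrow> B1"
  proof -
    have inc: "incseq (\<lambda>n. en \<kappa> P (N' n))"
      unfolding incseq_def by (intro allI impI en_mono) (use sP sN' N'_le in auto)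
    have "(SUP n. en \<kappa> P (N' n)) = B1"
      unfolding eP_eN_B1_B2_C1_C2_D1_D2_def
      by (rule en_SUP_inner[OF lsc sP sN sN' irN' N'_inc N'_sup])
    then show ?thesis using LIMSEQ_SUP[OF inc] by simp
  qed
  have lim_b2: "(\<lambda>n. en \<kappa> (N' n) P) \<longlonglongrightarrow> B2"
  proof -
    have inc: "incseq (\<lambda>n. en \<kappa> (N' n) P)"
      unfolding incseq_def by (intro allI impI en_mono) (use sP sN' N'_le in auto)
    have "(SUP n. en \<kappa> (N' n) P) = B2"
      unfolding eP_eN_B1_B2_C1_C2_D1_D2_def
      by (rule en_SUP_outer[OF sN sN' N'_inc N'_sup])
    then show ?thesis using LIMSEQ_SUP[OF inc] by simp
  qed
  have lim_d1: "(\<lambda>n. en \<kappa> (fst chi) (N' n)) \<longlonglongrightarrow> D1"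
  proof -
    have inc: "incseq (\<lambda>n. en \<kappa> (fst chi) (N' n))"
      unfolding incseq_def by (intro allI impI en_mono) (use schi sN' N'_le in auto)
    have "(SUP n. en \<kappa> (fst chi) (N' n)) = D1"
      unfolding eP_eN_B1_B2_C1_C2_D1_D2_def
      by (rule en_SUP_inner[OF lsc schi(1) sN sN' irN' N'_inc N'_sup])
    then show ?thesis using LIMSEQ_SUP[OF inc] by simp
  qed
  have H_lim: "H \<longlonglongrightarrow> Gchi \<kappa> chi Ip In \<mu>"
    unfolding H_def G by (rule GG_tendsto[OF Gfin lim_n lim_b1 lim_b2 lim_c2 lim_d1])
  have ev: "eventually (\<lambda>n. H n < y \<and> 0 < \<rho> (Kq n)) sequentially"
  proof (rule eventually_conj)
    show "eventually (\<lambda>n. H n < y) sequentially" using order_tendstoD(2)[OF H_lim less] .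
    show "eventually (\<lambda>n. 0 < \<rho> (Kq n)) sequentially"
      using order_tendstoD(1)[OF \<rho>_lim] al by simp
  qed
  then obtain n0 where n0: "H n0 < y" "0 < \<rho> (Kq n0)"
    by (auto simp: eventually_sequentially)
  show ?thesis
  proof (intro exI[of _ "Kq n0"] conjI allI impI)
    show "compact (Kq n0)" "Kq n0 \<subseteq> A l" using Kq by auto
    fix K assume K: "compact K \<and> Kq n0 \<subseteq> K \<and> K \<subseteq> A l"
    have Km: "K \<in> sets borel" using K compact_sets_borel by auto
    define r where "r = enn2real (\<rho> K)"
    have \<rho>K: "\<rho> (Kq n0) \<le> \<rho> K" "\<rho> K \<le> ennreal (a l)" using K \<rho>_mono \<rho>_le by auto
    have \<rho>K_eq: "\<rho> K = ennreal r" using \<rho>K(2) unfolding r_def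
      by (metis ennreal_enn2real ennreal_less_top order.strict_trans1)
    have r0: "enn2real (\<rho> (Kq n0)) \<le> r" unfolding r_def
      using \<rho>K by (intro enn2real_mono) (auto intro: le_less_trans)
    have rpos0: "0 < enn2real (\<rho> (Kq n0))"
      using n0(2) \<rho>K by (simp add: enn2real_positive_iff) (meson ennreal_less_top order.strict_trans1)
    have rpos: "0 < r" using r0 rpos0 by linarith
    have rle: "r \<le> a l" unfolding r_def using \<rho>K(2) al by (intro enn2real_leI) auto
    define c where "c = a l / r"
    have c1: "1 \<le> c" unfolding c_def using rpos rle by simp
    have cle: "c \<le> cq n0" unfolding c_def cq_def
      using r0 rpos0 al by (intro divide_left_mono) auto
    define \<mu>K where "\<mu>K = \<mu>(l := rs \<mu>l c K)"
    have norm: "ennreal c * (\<integral>\<^sup>+x. ennreal (g x) * indicator K x \<partial>\<mu> l) = ennreal (a l)"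
    proof -
      have "ennreal c * (\<integral>\<^sup>+x. ennreal (g x) * indicator K x \<partial>\<mu> l) = ennreal c * ennreal r"
        using \<rho>K_eq by (simp add: \<rho>_def \<mu>l_def)
      also have "\<dots> = ennreal (c * r)" using c1 rpos by (simp add: ennreal_mult)
      also have "c * r = a l" unfolding c_def using rpos by simp
      finally show ?thesis .
    qed
    have admK: "\<mu>K \<in> admissible \<kappa> Ip In (A(l := K)) a g"
      unfolding \<mu>K_def \<mu>l_def
      by (rule admissible_restrict[OF lsc adm lI]) (use K c1 norm gmK Km in auto)
    have PK: "summeas \<mu>K Ip = P" unfolding P_def \<mu>K_def by (rule summeas_cong) (use lIp in auto)
    define NK where "NK = summeas \<mu>K In"
    have sNK: "sets NK = sets borel" by (simp add: NK_def)
    have NK_em: "emeasure NK B = (\<Sum>i. if i \<in> In then (if i = l then emeasure (rs \<mu>l c K) B else emeasure (\<mu> i) B) else 0)"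
      if B: "B \<in> sets borel" for B
    proof -
      have "emeasure NK B = (\<Sum>i. if i \<in> In then emeasure (\<mu>K i) B else 0)"
        unfolding NK_def by (rule summeas_emeasure) (use B sets setsl in \<open>auto simp: \<mu>K_def\<close>)
      also have "\<dots> = (\<Sum>i. if i \<in> In then (if i = l then emeasure (rs \<mu>l c K) B else emeasure (\<mu> i) B) else 0)"
        by (intro suminf_cong) (auto simp: \<mu>K_def)
      finally show ?thesis .
    qed
    have NK_le: "emeasure NK B \<le> ennreal c * emeasure N B" if B: "B \<in> sets borel" for B
      unfolding NK_em[OF B] N_em[OF B]
    proof (rule suminf_le_cmult_ennreal)
      fix i
      have "emeasure (\<mu> i) B \<le> ennreal 1 * emeasure (\<mu> i) B" by simp
      also have "\<dots> \<le> ennreal c * emeasure (\<mu> i) B" using c1 by (intro mult_right_mono ennreal_leI) auto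
      finally have 1: "emeasure (\<mu> i) B \<le> ennreal c * emeasure (\<mu> i) B" .
      have 2: "emeasure (rs \<mu>l c K) B \<le> ennreal c * emeasure (\<mu> l) B"
        using rs_le[OF setsl Km B c1] by (simp add: \<mu>l_def)
      show "(if i \<in> In then (if i = l then emeasure (rs \<mu>l c K) B else emeasure (\<mu> i) B) else 0) \<le>
          ennreal c * (if i \<in> In then emeasure (\<mu> i) B else 0)"
        using 1 2 by auto
    qed
    have N'_NK: "emeasure (N' n0) B \<le> emeasure NK B" if B: "B \<in> sets borel" for B
      unfolding NK_em[OF B] N'_em[OF B]
    proof (intro suminf_le allI summableI)
      fix i
      have "emeasure \<mu>l (Kq n0 \<inter> B) \<le> emeasure \<mu>l (K \<inter> B)"
        using K B Km Kqm setsl by (intro emeasure_mono) auto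
      also have "\<dots> = ennreal 1 * emeasure \<mu>l (K \<inter> B)" by simp
      also have "\<dots> \<le> ennreal c * emeasure \<mu>l (K \<inter> B)" using c1 by (intro mult_right_mono ennreal_leI) auto
      also have "\<dots> = emeasure (rs \<mu>l c K) B" using Km B setsl by (simp add: rs_emeasure)
      finally show "(if i \<in> In then (if i = l then emeasure \<mu>l (Kq n0 \<inter> B) else emeasure (\<mu> i) B) else 0) \<le>
          (if i \<in> In then (if i = l then emeasure (rs \<mu>l c K) B else emeasure (\<mu> i) B) else 0)"
        by auto
    qed
    have GK: "Gchi \<kappa> chi Ip In \<mu>K = GG eP (en \<kappa> NK NK) (en \<kappa> P NK) (en \<kappa> NK P) C1 (en \<kappa> (snd chi) NK)
        (en \<kappa> (fst chi) NK) D2"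
      unfolding Gchi_GG PK NK_def[symmetric] eP_eN_B1_B2_C1_C2_D1_D2_def ..
    have e1: "en \<kappa> NK NK \<le> ennreal (cq n0) * (ennreal (cq n0) * eN)"
    proof -
      have "en \<kappa> NK NK \<le> ennreal c * (ennreal c * eN)"
        unfolding eP_eN_B1_B2_C1_C2_D1_D2_def
        by (rule en_le_scale[OF lsc sNK sN sNK sN irN NK_le NK_le])
      also have "\<dots> \<le> ennreal (cq n0) * (ennreal (cq n0) * eN)"
        using cle by (intro mult_mono ennreal_leI) auto
      finally show ?thesis .
    qed
    have e2: "en \<kappa> P (N' n0) \<le> en \<kappa> P NK"
      by (rule en_mono) (use sP sN' sNK N'_NK in auto)
    have e3: "en \<kappa> (N' n0) P \<le> en \<kappa> NK P"
      by (rule en_mono) (use sP sN' sNK N'_NK in auto)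
    have e4: "en \<kappa> (snd chi) NK \<le> ennreal (cq n0) * C2"
    proof -
      have "en \<kappa> (snd chi) NK \<le> 1 * (ennreal c * C2)"
        unfolding eP_eN_B1_B2_C1_C2_D1_D2_def
        by (rule en_le_scale[OF lsc schi(2) schi(2) sNK sN irN _ NK_le]) simp
      also have "\<dots> \<le> ennreal (cq n0) * C2"
        using cle by (auto intro: mult_right_mono ennreal_leI)
      finally show ?thesis .
    qed
    have e5: "en \<kappa> (fst chi) (N' n0) \<le> en \<kappa> (fst chi) NK"
      by (rule en_mono) (use schi sN' sNK N'_NK in auto)
    have "Ginf \<kappa> chi Ip In (A(l := K)) a g \<le> Gchi \<kappa> chi Ip In \<mu>K"
      unfolding Ginf_def using admK by (rule INF_lower)
    also have "\<dots> \<le> H n0"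
      unfolding GK H_def by (rule GG_mono[OF e1 e2 e3 e4 e5])
    also have "\<dots> < y" by (rule n0(1))
    finally show "Ginf \<kappa> chi Ip In (A(l := K)) a g < y" .
  qed
qed



lemma adm_sub:
  fixes \<kappa> :: "'a::t2_space \<Rightarrow> 'a \<Rightarrow> ennreal"
  assumes K: "K \<subseteq> A l" "K \<in> sets borel"
  shows "admissible \<kappa> Ip In (A(l := K)) a g \<subseteq> admissible \<kappa> Ip In A a g"
proof
  fix \<mu> assume adm: "\<mu> \<in> admissible \<kappa> Ip In (A(l := K)) a g"
  have rad: "\<And>i. i \<in> Ip \<union> In \<Longrightarrow> radon (\<mu> i)" and
    conc: "\<And>i. i \<in> Ip \<union> In \<Longrightarrow> concentrated (\<mu> i) ((A(l := K)) i)" and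
    int: "\<And>i. i \<in> Ip \<union> In \<Longrightarrow> (\<integral>\<^sup>+ x. ennreal (g x) * indicator ((A(l := K)) i) x \<partial>\<mu> i) = ennreal (a i)" and
    fve: "finite_vec_energy \<kappa> Ip In \<mu>"
    using adm unfolding admissible_def by auto
  show "\<mu> \<in> admissible \<kappa> Ip In A a g"
    unfolding admissible_def
  proof (intro CollectI conjI ballI fve)
    fix i assume i: "i \<in> Ip \<union> In"
    show "radon (\<mu> i)" by (rule rad[OF i])
    show "concentrated (\<mu> i) (A i)"
    proof (cases "i = l")
      case False then show ?thesis using conc[OF i] by simp
    next
      case True then show ?thesis using conc[OF i] K unfolding concentrated_def by auto
    qed
    show "(\<integral>\<^sup>+ x. ennreal (g x) * indicator (A i) x \<partial>\<mu> i) = ennreal (a i)"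
    proof (cases "i = l")
      case False then show ?thesis using int[OF i] by simp
    next
      case True
      obtain B where B: "B \<in> sets borel" "- K \<subseteq> B" "emeasure (\<mu> l) B = 0"
        using conc[OF i] True unfolding concentrated_def by auto
      have sl: "sets (\<mu> l) = sets borel" using rad[OF i] True by (simp add: radon_def)
      have "AE x in \<mu> l. x \<notin> B"
        by (rule AE_I'[of B]) (use B sl in \<open>auto intro: null_setsI\<close>)
      then have "(\<integral>\<^sup>+ x. ennreal (g x) * indicator (A l) x \<partial>\<mu> l) = (\<integral>\<^sup>+ x. ennreal (g x) * indicator K x \<partial>\<mu> l)"
        by (intro nn_integral_cong_AE) (use B K in \<open>auto elim!: eventually_mono simp: indicator_def\<close>)
      then show ?thesis using int[OF i] True by simp
    qed
  qed
qed



theorem lemma13p1: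
  fixes \<kappa> :: "'a::t2_space \<Rightarrow> 'a \<Rightarrow> ennreal"
    and Ip In :: "nat set" and A :: "nat \<Rightarrow> 'a set"
    and a :: "nat \<Rightarrow> real" and g :: "'a \<Rightarrow> real"
    and chi :: "'a smeasure" and h :: real and l :: nat
  assumes loc_compact: "\<forall>x::'a. \<exists>K. compact K \<and> x \<in> interior K"
    and noncompact: "\<not> compact (UNIV :: 'a set)"
    and lsc: "\<forall>t. open {p :: 'a \<times> 'a. t < \<kappa> (fst p) (snd p)}"
    and symm: "\<forall>x y. \<kappa> x y = \<kappa> y x"
    and spd: "strictly_pos_def \<kappa>"
    and cons: "consistent \<kappa>"
    and offdiag_finite: "\<forall>x y. x \<noteq> y \<longrightarrow> \<kappa> x y < \<infinity>"
    and offdiag_cont: "continuous_on {p :: 'a \<times> 'a. fst p \<noteq> snd p} (\<lambda>p. \<kappa> (fst p) (snd p))"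
    and decay: "\<forall>\<epsilon>>0. \<forall>K. compact K \<longrightarrow>
                  (\<exists>K'. compact K' \<and> (\<forall>x\<in>K. \<forall>y. y \<notin> K' \<longrightarrow> \<kappa> x y < \<epsilon>))"
    and h: "h \<ge> 1" "gen_max_principle \<kappa> h"
    and cond: "condenser \<kappa> Ip In A"
    and chi: "energy_space \<kappa> chi"
      "emeasure (fst chi) UNIV < \<infinity>" "emeasure (snd chi) UNIV < \<infinity>"
      "support (fst chi) \<inter> (\<Union>j\<in>In. A j) = {}"
      "support (snd chi) \<inter> (\<Union>i\<in>Ip. A i) = {}"
    and weight: "weight_ok \<kappa> (Ip \<union> In) A g"
    and a_pos: "\<forall>i\<in>Ip \<union> In. a i > 0"
    and a_sum: "a summable_on (Ip \<union> In)"
    and G_fin: "Ginf \<kappa> chi Ip In A a g < \<infinity>"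
    and cap: "{i\<in>Ip \<union> In. capacity \<kappa> (A i) = \<infinity>} = {l}"
    and ell: "l \<in> In"
    and disj: "\<forall>i\<in>Ip \<union> In. i \<noteq> l \<longrightarrow> A i \<inter> A l = {}"
  shows "((\<lambda>K. Ginf \<kappa> chi Ip In (A(l := K)) a g) \<longlongrightarrow> Ginf \<kappa> chi Ip In A a g)
           (compact_subsets_filter (A l))"
proof (rule order_tendstoI)
  let ?F = "compact_subsets_filter (A l)"
  let ?G = "\<lambda>K. Ginf \<kappa> chi Ip In (A(l := K)) a g"
  have evK: "eventually P ?F" if "compact K0" "K0 \<subseteq> A l"
      "\<And>K. compact K \<and> K0 \<subseteq> K \<and> K \<subseteq> A l \<Longrightarrow> P K" for P K0
    unfolding compact_subsets_filter_def
    by (rule eventually_INF1[of K0]) (use that in \<open>auto simp: eventually_principal\<close>)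
  fix y assume y: "y < Ginf \<kappa> chi Ip In A a g"
  show "eventually (\<lambda>K. y < ?G K) ?F"
  proof (rule evK[of "{}"])
    fix K assume K: "compact K \<and> {} \<subseteq> K \<and> K \<subseteq> A l"
    have "Ginf \<kappa> chi Ip In A a g \<le> ?G K"
      unfolding Ginf_def by (rule INF_superset_mono[OF adm_sub]) (use K compact_sets_borel in auto)
    then show "y < ?G K" using y by simp
  qed auto
next
  let ?F = "compact_subsets_filter (A l)"
  let ?G = "\<lambda>K. Ginf \<kappa> chi Ip In (A(l := K)) a g"
  have evK: "eventually P ?F" if "compact K0" "K0 \<subseteq> A l"
      "\<And>K. compact K \<and> K0 \<subseteq> K \<and> K \<subseteq> A l \<Longrightarrow> P K" for P K0
    unfolding compact_subsets_filter_def
    by (rule eventually_INF1[of K0]) (use that in \<open>auto simp: eventually_principal\<close>)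
  fix y assume y: "Ginf \<kappa> chi Ip In A a g < y"
  then obtain \<mu> where \<mu>: "\<mu> \<in> admissible \<kappa> Ip In A a g" "Gchi \<kappa> chi Ip In \<mu> < y"
    unfolding Ginf_def by (auto simp: INF_less_iff)
  obtain K0 where K0: "compact K0" "K0 \<subseteq> A l"
    "\<And>K. compact K \<and> K0 \<subseteq> K \<and> K \<subseteq> A l \<Longrightarrow> ?G K < y"
    using upper[OF lsc cond chi(1) weight a_pos ell \<mu>] by blast
  show "eventually (\<lambda>K. ?G K < y) ?F"
    by (rule evK[OF K0(1,2)]) (rule K0(3))
qed

end
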